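(* Let $k$ be an algebraically closed field, $K$ a finitely generated field extension of $k$ with $\operatorname{tr.deg}_k K = n$, and $R \subseteq K$ a discrete valuation ring containing $k$, induced by a valuation $\nu$ on $K$, with maximal ideal $m_R$ and $\operatorname{tr.deg}_k R/m_R = n-1$. Let $K' \subseteq K$ be a subfield containing $k$, finitely generated over $k$, with $\operatorname{tr.deg}_k K' = m \leq n$. If $K' \cap m_R \neq \{0\}$, then $$\operatorname{tr.deg}_k (K' \cap R)/(K' \cap m_R) = m - 1.$$ *)

theory Defs
  imports "HOL-Computational_Algebra.Polynomial"
begin

text \<open>Subfields of an ambient field (the ambient type plays the role of K).\<close>
definition is_subfield :: "'a::field set \<Rightarrow> bool" where
  "is_subfield F \<longleftrightarrow> 0 \<in> F \<and> 1 \<in> F \<and>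
     (\<forall>x\<in>F. \<forall>y\<in>F. x + y \<in> F \<and> x * y \<in> F) \<and>
     (\<forall>x\<in>F. - x \<in> F) \<and> (\<forall>x\<in>F. x \<noteq> 0 \<longrightarrow> inverse x \<in> F)"

definition field_gen :: "'a::field set \<Rightarrow> 'a set \<Rightarrow> 'a set" where
  "field_gen k S = \<Inter>{F. is_subfield F \<and> k \<union> S \<subseteq> F}"

definition fin_gen_over :: "'a::field set \<Rightarrow> 'a set \<Rightarrow> bool" where
  "fin_gen_over k L \<longleftrightarrow> (\<exists>S. finite S \<and> L = field_gen k S)"

definition alg_closed_subfield :: "'a::field set \<Rightarrow> bool" where
  "alg_closed_subfield k \<longleftrightarrow> is_subfield k \<and>
     (\<forall>p::'a poly. (\<forall>i. coeff p i \<in> k) \<and> degree p > 0 \<longrightarrow> (\<exists>x\<in>k. poly p x = 0))"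

text \<open>Evaluation of a multivariate polynomial with monomial support M (exponent
  vectors e :: nat \<Rightarrow> nat) and coefficients c at the tuple xs.\<close>
definition mpoly_eval :: "(nat \<Rightarrow> nat) set \<Rightarrow> ((nat \<Rightarrow> nat) \<Rightarrow> 'a::field) \<Rightarrow> 'a list \<Rightarrow> 'a" where
  "mpoly_eval M c xs = (\<Sum>e\<in>M. c e * (\<Prod>i<length xs. (xs ! i) ^ (e i)))"

text \<open>The residues of xs modulo the ideal I are algebraically independent over k:
  no nonzero polynomial over k in length xs variables vanishes at them modulo I.
  With I = {0} this is ordinary algebraic independence.\<close>
definition alg_indep_mod :: "'a::field set \<Rightarrow> 'a set \<Rightarrow> 'a list \<Rightarrow> bool" where
  "alg_indep_mod k I xs \<longleftrightarrow>
     (\<forall>M c. finite M \<and> M \<noteq> {} \<and> (\<forall>e\<in>M. \<forall>i\<ge>length xs. e i = 0) \<and>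
            (\<forall>e\<in>M. c e \<in> k \<and> c e \<noteq> 0) \<longrightarrow> mpoly_eval M c xs \<notin> I)"

text \<open>Transcendence degree over k of the ring A / I equals d (A a ring containing k,
  I an ideal of A with A/I a field).\<close>
definition has_trdeg :: "'a::field set \<Rightarrow> 'a set \<Rightarrow> 'a set \<Rightarrow> nat \<Rightarrow> bool" where
  "has_trdeg k A I d \<longleftrightarrow>
     (\<exists>xs. set xs \<subseteq> A \<and> length xs = d \<and> alg_indep_mod k I xs) \<and>
     (\<forall>xs. set xs \<subseteq> A \<and> alg_indep_mod k I xs \<longrightarrow> length xs \<le> d)"

text \<open>Discrete (normalized, surjective onto Z) valuation on the ambient field;
  only its values on nonzero elements matter.\<close>
definition discrete_valuation :: "('a::field \<Rightarrow> int) \<Rightarrow> bool" where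
  "discrete_valuation \<nu> \<longleftrightarrow>
     (\<forall>x y. x \<noteq> 0 \<and> y \<noteq> 0 \<longrightarrow> \<nu> (x * y) = \<nu> x + \<nu> y) \<and>
     (\<forall>x y. x \<noteq> 0 \<and> y \<noteq> 0 \<and> x + y \<noteq> 0 \<longrightarrow> \<nu> (x + y) \<ge> min (\<nu> x) (\<nu> y)) \<and>
     (\<forall>z. \<exists>x. x \<noteq> 0 \<and> \<nu> x = z)"

definition val_ring :: "('a::field \<Rightarrow> int) \<Rightarrow> 'a set" where
  "val_ring \<nu> = {x. x = 0 \<or> \<nu> x \<ge> 0}"

definition val_ideal :: "('a::field \<Rightarrow> int) \<Rightarrow> 'a set" where
  "val_ideal \<nu> = {x. x = 0 \<or> \<nu> x > 0}"

end

theory Submission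
  imports Defs "HOL-Combinatorics.Permutations" "HOL-Algebra.Finite_Extensions" "HOL-Algebra.QuotRing"
begin


definition mmon :: "'a::field list \<Rightarrow> (nat \<Rightarrow> nat) \<Rightarrow> 'a" where
  "mmon xs e = (\<Prod>i<length xs. (xs ! i) ^ (e i))"

lemma mpoly_eval_mon: "mpoly_eval M c xs = (\<Sum>e\<in>M. c e * mmon xs e)"
  by (simp add: mpoly_eval_def mmon_def)

definition fstp :: "nat \<Rightarrow> (nat \<Rightarrow> nat) \<Rightarrow> (nat \<Rightarrow> nat)" where
  "fstp p e = (\<lambda>i. if i < p then e i else 0)"
definition sndp :: "nat \<Rightarrow> (nat \<Rightarrow> nat) \<Rightarrow> (nat \<Rightarrow> nat)" where
  "sndp p e = (\<lambda>i. e (p + i))"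
definition comb :: "nat \<Rightarrow> (nat \<Rightarrow> nat) \<Rightarrow> (nat \<Rightarrow> nat) \<Rightarrow> (nat \<Rightarrow> nat)" where
  "comb p b g = (\<lambda>i. if i < p then b i else g (i - p))"

lemma prod_split_add: "(\<Prod>i<p+(q::nat). f i) = (\<Prod>i<p. f i) * (\<Prod>i<q. f (p+i))"
  by (induction q) (auto simp: mult.assoc)

lemma mon_append:
  "mmon (us @ vs) e = mmon us (fstp (length us) e) * mmon vs (sndp (length us) e)"
  unfolding mmon_def length_append prod_split_add
  by (simp add: fstp_def sndp_def nth_append)

lemma comb_fst_snd: "comb p (fstp p e) (sndp p e) = e"
  by (auto simp: comb_def fstp_def sndp_def)

lemma fstp_comb: "(\<forall>i\<ge>p. b i = 0) \<Longrightarrow> fstp p (comb p b g) = b"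
  by (auto simp: comb_def fstp_def)

lemma sndp_comb: "sndp p (comb p b g) = g"
  by (auto simp: comb_def sndp_def)

lemma fstp_snd_inj: "fstp p e1 = fstp p e2 \<Longrightarrow> sndp p e1 = sndp p e2 \<Longrightarrow> e1 = e2"
  by (metis comb_fst_snd)

lemma mpoly_eval_block:
  assumes "finite M"
  shows "mpoly_eval M c (us @ vs) =
    (\<Sum>g\<in>sndp (length us) ` M.
       mpoly_eval (fstp (length us) ` {e\<in>M. sndp (length us) e = g})
                  (\<lambda>b. c (comb (length us) b g)) us * mmon vs g)"
proof -
  let ?p = "length us"
  have "mpoly_eval M c (us @ vs) = (\<Sum>e\<in>M. c e * mmon us (fstp ?p e) * mmon vs (sndp ?p e))"
    by (simp add: mpoly_eval_mon mon_append mult.assoc)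
  also have "\<dots> = (\<Sum>g\<in>sndp ?p ` M. \<Sum>e\<in>{e\<in>M. sndp ?p e = g}. c e * mmon us (fstp ?p e) * mmon vs (sndp ?p e))"
    by (rule sum.group[symmetric]) (use assms in simp_all)
  also have "\<dots> = (\<Sum>g\<in>sndp ?p ` M.
       mpoly_eval (fstp ?p ` {e\<in>M. sndp ?p e = g}) (\<lambda>b. c (comb ?p b g)) us * mmon vs g)"
  proof (rule sum.cong[OF refl])
    fix g assume "g \<in> sndp ?p ` M"
    have inj: "inj_on (fstp ?p) {e\<in>M. sndp ?p e = g}"
    proof (rule inj_onI)
      fix x y assume "x \<in> {e\<in>M. sndp ?p e = g}" "y \<in> {e\<in>M. sndp ?p e = g}" "fstp ?p x = fstp ?p y"
      then show "x = y" using fstp_snd_inj[of ?p x y] by simp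
    qed
    have "mpoly_eval (fstp ?p ` {e\<in>M. sndp ?p e = g}) (\<lambda>b. c (comb ?p b g)) us
        = (\<Sum>e\<in>{e\<in>M. sndp ?p e = g}. c (comb ?p (fstp ?p e) g) * mmon us (fstp ?p e))"
      unfolding mpoly_eval_mon by (subst sum.reindex[OF inj]) simp
    also have "\<dots> = (\<Sum>e\<in>{e\<in>M. sndp ?p e = g}. c e * mmon us (fstp ?p e))"
    proof (intro sum.cong refl)
      fix x assume "x \<in> {e\<in>M. sndp ?p e = g}"
      then have "comb ?p (fstp ?p x) g = x" using comb_fst_snd[of ?p x] by simp
      then show "c (comb ?p (fstp ?p x) g) * mmon us (fstp ?p x) = c x * mmon us (fstp ?p x)" by simp
    qed
    finally show "(\<Sum>e\<in>{e\<in>M. sndp ?p e = g}. c e * mmon us (fstp ?p e) * mmon vs (sndp ?p e)) =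
       mpoly_eval (fstp ?p ` {e\<in>M. sndp ?p e = g}) (\<lambda>b. c (comb ?p b g)) us * mmon vs g"
      by (simp add: sum_distrib_right)
  qed
  finally show ?thesis .
qed


lemma mon_Nil[simp]: "mmon [] e = 1" by (simp add: mmon_def)
lemma mon_zero[simp]: "mmon xs (\<lambda>_. 0) = 1" by (simp add: mmon_def)
lemma mon_single: "mmon [a] g = a ^ g 0" by (simp add: mmon_def)

lemma mon_append_supp:
  assumes "\<forall>i\<ge>length xs. e i = 0"
  shows "mmon (xs @ ys) e = mmon xs e"
proof -
  have "fstp (length xs) e = e" using assms by (auto simp: fstp_def)
  moreover have "sndp (length xs) e = (\<lambda>_. 0)" using assms by (auto simp: sndp_def)
  ultimately show ?thesis by (simp add: mon_append)
qed

lemma mpoly_eval_append_supp: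
  assumes "\<forall>e\<in>M. \<forall>i\<ge>length xs. e i = 0"
  shows "mpoly_eval M c (xs @ ys) = mpoly_eval M c xs"
  unfolding mpoly_eval_mon using assms by (intro sum.cong refl) (simp add: mon_append_supp)

definition sring :: "'a::field set \<Rightarrow> bool" where
  "sring S \<longleftrightarrow> 0 \<in> S \<and> 1 \<in> S \<and> (\<forall>x\<in>S. \<forall>y\<in>S. x + y \<in> S \<and> x * y \<in> S) \<and> (\<forall>x\<in>S. - x \<in> S)"

definition idl :: "'a::field set \<Rightarrow> 'a set \<Rightarrow> bool" where
  "idl A I \<longleftrightarrow> 0 \<in> I \<and> I \<subseteq> A \<and> (\<forall>x\<in>I. \<forall>y\<in>I. x + y \<in> I) \<and> (\<forall>x\<in>I. - x \<in> I) \<and>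
     (\<forall>x\<in>I. \<forall>a\<in>A. a * x \<in> I)"

definition polyset :: "'a::field set \<Rightarrow> 'a list \<Rightarrow> 'a set" where
  "polyset B xs = {mpoly_eval M c xs | M c. finite M \<and> (\<forall>e\<in>M. \<forall>i\<ge>length xs. e i = 0) \<and> (\<forall>e\<in>M. c e \<in> B)}"

definition aim :: "'a::field set \<Rightarrow> 'a set \<Rightarrow> 'a list \<Rightarrow> bool" where
  "aim B I xs \<longleftrightarrow> (\<forall>M c. finite M \<and> M \<noteq> {} \<and> (\<forall>e\<in>M. \<forall>i\<ge>length xs. e i = 0) \<and>
       (\<forall>e\<in>M. c e \<in> B \<and> c e \<notin> I) \<longrightarrow> mpoly_eval M c xs \<notin> I)"

definition ralg :: "'a::field set \<Rightarrow> 'a set \<Rightarrow> 'a \<Rightarrow> bool" where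
  "ralg I B a \<longleftrightarrow> (\<exists>D c. finite D \<and> (\<forall>i\<in>D. c i \<in> B) \<and> (\<exists>i\<in>D. c i \<notin> I) \<and> (\<Sum>i\<in>D. c i * a ^ i) \<in> I)"

lemma aim_iff_alg_indep_mod:
  assumes "\<forall>x\<in>B. x \<in> I \<longleftrightarrow> x = 0"
  shows "alg_indep_mod B I xs = aim B I xs"
proof -
  have eq: "\<And>c M. (\<forall>e\<in>M. c e \<in> B \<and> c e \<noteq> 0) = (\<forall>e\<in>M. c e \<in> B \<and> c e \<notin> I)" using assms by blast
  show ?thesis unfolding alg_indep_mod_def aim_def by (simp only: eq)
qed

lemma sring_sum: assumes "sring S" "finite XX" "\<And>i. i \<in> XX \<Longrightarrow> f i \<in> S" shows "sum f XX \<in> S"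
  using assms(2,3) by (induction XX rule: finite_induct) (use assms(1) in \<open>auto simp: sring_def\<close>)

lemma sring_prod: assumes "sring S" "finite XX" "\<And>i. i \<in> XX \<Longrightarrow> f i \<in> S" shows "prod f XX \<in> S"
  using assms(2,3) by (induction XX rule: finite_induct) (use assms(1) in \<open>auto simp: sring_def\<close>)

lemma sring_power: "sring S \<Longrightarrow> x \<in> S \<Longrightarrow> x ^ n \<in> S"
  by (induction n) (auto simp: sring_def)

lemma sring_mon: "sring S \<Longrightarrow> set xs \<subseteq> S \<Longrightarrow> mmon xs e \<in> S"
  unfolding mmon_def by (rule sring_prod) (auto intro!: sring_power)

lemma sring_diff: "sring S \<Longrightarrow> x \<in> S \<Longrightarrow> y \<in> S \<Longrightarrow> x - y \<in> S"
  unfolding sring_def by (metis diff_conv_add_uminus)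

lemma idl_sum: assumes "idl A I" "finite XX" "\<And>i. i \<in> XX \<Longrightarrow> f i \<in> I" shows "sum f XX \<in> I"
  using assms(2,3) by (induction XX rule: finite_induct) (use assms(1) in \<open>auto simp: idl_def\<close>)

lemma idl_mult: "idl A I \<Longrightarrow> x \<in> I \<Longrightarrow> a \<in> A \<Longrightarrow> a * x \<in> I"
  by (auto simp: idl_def)

lemma idl_mult2: "idl A I \<Longrightarrow> x \<in> I \<Longrightarrow> a \<in> A \<Longrightarrow> x * a \<in> I"
  by (auto simp: idl_def mult.commute)

lemma idl_diff: "idl A I \<Longrightarrow> x \<in> I \<Longrightarrow> y \<in> I \<Longrightarrow> x - y \<in> I"
  unfolding idl_def by (metis diff_conv_add_uminus)

lemma idl_add_notin: "idl A I \<Longrightarrow> x \<notin> I \<Longrightarrow> y \<in> I \<Longrightarrow> x + y \<notin> I"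
  by (metis add_diff_cancel_right' idl_diff)

lemma mpoly_eval_in: "sring S \<Longrightarrow> finite M \<Longrightarrow> (\<And>e. e \<in> M \<Longrightarrow> c e \<in> S) \<Longrightarrow> set xs \<subseteq> S \<Longrightarrow>
   mpoly_eval M c xs \<in> S"
  unfolding mpoly_eval_mon by (rule sring_sum) (auto simp: sring_def sring_mon)

lemma polyset_min: "sring S \<Longrightarrow> B \<subseteq> S \<Longrightarrow> set xs \<subseteq> S \<Longrightarrow> polyset B xs \<subseteq> S"
  unfolding polyset_def by (auto intro!: mpoly_eval_in)

lemma polyset_mono: "B \<subseteq> B' \<Longrightarrow> polyset B xs \<subseteq> polyset B' xs"
  unfolding polyset_def by blast

lemma polyset_const: "b \<in> B \<Longrightarrow> b \<in> polyset B xs"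
  unfolding polyset_def
  by (rule CollectI, rule exI[of _ "{\<lambda>_. 0}"], rule exI[of _ "\<lambda>_. b"]) (simp add: mpoly_eval_mon)

lemma polyset_var:
  assumes "j < length xs" "1 \<in> B"
  shows "xs ! j \<in> polyset B xs"
proof -
  define e where "e = (\<lambda>i. if i = j then 1 else (0::nat))"
  have "mmon xs e = (\<Prod>i\<in>{..<length xs}. if i = j then xs ! j else 1)"
    unfolding mmon_def e_def by (rule prod.cong) auto
  also have "\<dots> = xs ! j" using assms(1) by (subst prod.delta) auto
  finally have "mpoly_eval {e} (\<lambda>_. 1) xs = xs ! j" by (simp add: mpoly_eval_mon)
  moreover have "\<forall>e'\<in>{e}. \<forall>i\<ge>length xs. e' i = 0" using assms(1) by (auto simp: e_def)
  moreover have "\<forall>e'\<in>{e}. (\<lambda>_. 1) e' \<in> B" using assms(2) by simp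
  ultimately show ?thesis unfolding polyset_def
    by (intro CollectI exI[of _ "{e}"] exI[of _ "\<lambda>_. 1"]) simp
qed

lemma polyset_set: assumes "1 \<in> B" shows "set xs \<subseteq> polyset B xs"
proof
  fix x assume "x \<in> set xs"
  then obtain j where "j < length xs" "x = xs ! j" by (metis in_set_conv_nth)
  then show "x \<in> polyset B xs" using polyset_var[of j xs B] assms by simp
qed

lemma polyset_add:
  assumes "sring B" "x \<in> polyset B xs" "y \<in> polyset B xs"
  shows "x + y \<in> polyset B xs"
proof -
  obtain M1 c1 where 1: "x = mpoly_eval M1 c1 xs" "finite M1" "\<forall>e\<in>M1. \<forall>i\<ge>length xs. e i = 0" "\<forall>e\<in>M1. c1 e \<in> B"
    using assms(2) unfolding polyset_def by blast
  obtain M2 c2 where 2: "y = mpoly_eval M2 c2 xs" "finite M2" "\<forall>e\<in>M2. \<forall>i\<ge>length xs. e i = 0" "\<forall>e\<in>M2. c2 e \<in> B"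
    using assms(3) unfolding polyset_def by blast
  define c where "c e = (if e \<in> M1 then c1 e else 0) + (if e \<in> M2 then c2 e else 0)" for e
  have "mpoly_eval (M1 \<union> M2) c xs = (\<Sum>e\<in>M1 \<union> M2. (if e \<in> M1 then c1 e else 0) * mmon xs e) +
      (\<Sum>e\<in>M1 \<union> M2. (if e \<in> M2 then c2 e else 0) * mmon xs e)"
    unfolding mpoly_eval_mon c_def by (simp add: distrib_right sum.distrib)
  also have "(\<Sum>e\<in>M1 \<union> M2. (if e \<in> M1 then c1 e else 0) * mmon xs e) = x"
    unfolding 1 mpoly_eval_mon using 1(2) 2(2)
    by (subst sum.mono_neutral_cong_right[of "M1 \<union> M2" M1]) auto
  also have "(\<Sum>e\<in>M1 \<union> M2. (if e \<in> M2 then c2 e else 0) * mmon xs e) = y"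
    unfolding 2 mpoly_eval_mon using 1(2) 2(2)
    by (subst sum.mono_neutral_cong_right[of "M1 \<union> M2" M2]) auto
  finally have "x + y = mpoly_eval (M1 \<union> M2) c xs" ..
  moreover have "\<forall>e\<in>M1 \<union> M2. c e \<in> B" using 1(4) 2(4) assms(1) by (auto simp: c_def sring_def)
  ultimately show ?thesis unfolding polyset_def using 1(2,3) 2(2,3) by blast
qed

lemma polyset_neg:
  assumes "sring B" "x \<in> polyset B xs"
  shows "- x \<in> polyset B xs"
proof -
  obtain M1 c1 where 1: "x = mpoly_eval M1 c1 xs" "finite M1" "\<forall>e\<in>M1. \<forall>i\<ge>length xs. e i = 0" "\<forall>e\<in>M1. c1 e \<in> B"
    using assms(2) unfolding polyset_def by blast
  have "- x = mpoly_eval M1 (\<lambda>e. - c1 e) xs" unfolding 1 mpoly_eval_mon by (simp add: sum_negf)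
  moreover have "\<forall>e\<in>M1. - c1 e \<in> B" using 1(4) assms(1) by (auto simp: sring_def)
  ultimately show ?thesis unfolding polyset_def using 1(2,3) by blast
qed

lemma mon_add: "mmon xs (\<lambda>i. e1 i + e2 i) = mmon xs e1 * mmon xs e2"
  unfolding mmon_def by (simp add: power_add prod.distrib)

lemma polyset_mult:
  assumes "sring B" "x \<in> polyset B xs" "y \<in> polyset B xs"
  shows "x * y \<in> polyset B xs"
proof -
  obtain M1 c1 where 1: "x = mpoly_eval M1 c1 xs" "finite M1" "\<forall>e\<in>M1. \<forall>i\<ge>length xs. e i = 0" "\<forall>e\<in>M1. c1 e \<in> B"
    using assms(2) unfolding polyset_def by blast
  obtain M2 c2 where 2: "y = mpoly_eval M2 c2 xs" "finite M2" "\<forall>e\<in>M2. \<forall>i\<ge>length xs. e i = 0" "\<forall>e\<in>M2. c2 e \<in> B"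
    using assms(3) unfolding polyset_def by blast
  define pl where "pl = (\<lambda>(e1::nat\<Rightarrow>nat, e2::nat\<Rightarrow>nat). (\<lambda>i. e1 i + e2 i))"
  define M where "M = pl ` (M1 \<times> M2)"
  define c where "c e = (\<Sum>q\<in>{q\<in>M1 \<times> M2. pl q = e}. c1 (fst q) * c2 (snd q))" for e
  have fin: "finite M" using 1(2) 2(2) by (simp add: M_def)
  have "x * y = (\<Sum>q\<in>M1 \<times> M2. (c1 (fst q) * mmon xs (fst q)) * (c2 (snd q) * mmon xs (snd q)))"
    unfolding 1 2 mpoly_eval_mon sum_product sum.cartesian_product by (simp add: case_prod_beta)
  also have "\<dots> = (\<Sum>q\<in>M1 \<times> M2. c1 (fst q) * c2 (snd q) * mmon xs (pl q))"
    by (rule sum.cong) (auto simp: pl_def mon_add mult_ac)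
  also have "\<dots> = (\<Sum>e\<in>M. \<Sum>q\<in>{q\<in>M1 \<times> M2. pl q = e}. c1 (fst q) * c2 (snd q) * mmon xs (pl q))"
    by (rule sum.group[symmetric]) (use 1(2) 2(2) fin in \<open>auto simp: M_def\<close>)
  also have "\<dots> = mpoly_eval M c xs"
    unfolding mpoly_eval_mon c_def sum_distrib_right by (intro sum.cong refl) auto
  finally have "x * y = mpoly_eval M c xs" .
  moreover have "\<forall>e\<in>M. \<forall>i\<ge>length xs. e i = 0" using 1(3) 2(3) by (auto simp: M_def pl_def)
  moreover have "\<forall>e\<in>M. c e \<in> B"
    unfolding c_def using assms(1) 1(2) 2(2) 1(4) 2(4)
    by (auto intro!: sring_sum simp: sring_def)
  ultimately show ?thesis unfolding polyset_def using fin by blast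
qed

lemma sring_polyset: "sring B \<Longrightarrow> sring (polyset B xs)"
proof -
  assume B: "sring B"
  then have "0 \<in> B" "1 \<in> B" by (auto simp: sring_def)
  then show ?thesis unfolding sring_def[of "polyset B xs"]
    using polyset_add[OF B] polyset_mult[OF B] polyset_neg[OF B] polyset_const by blast
qed

lemma polyset_subset: "sring B \<Longrightarrow> B \<subseteq> polyset B xs"
  using polyset_const by blast

lemma polyset_set_mono: assumes "sring B" "set xs \<subseteq> set ys" shows "polyset B xs \<subseteq> polyset B ys"
proof (rule polyset_min)
  show "sring (polyset B ys)" by (rule sring_polyset[OF assms(1)])
  show "B \<subseteq> polyset B ys" by (rule polyset_subset[OF assms(1)])
  have "1 \<in> B" using assms(1) by (simp add: sring_def)
  then show "set xs \<subseteq> polyset B ys" using assms(2) polyset_set[of B ys] by blast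
qed



lemma polysetI: "finite M \<Longrightarrow> \<forall>e\<in>M. \<forall>i\<ge>length xs. e i = 0 \<Longrightarrow> \<forall>e\<in>M. c e \<in> B \<Longrightarrow>
  mpoly_eval M c xs \<in> polyset B xs"
  unfolding polyset_def by blast

lemma aimE: "aim B I xs \<Longrightarrow> finite M \<Longrightarrow> M \<noteq> {} \<Longrightarrow> \<forall>e\<in>M. \<forall>i\<ge>length xs. e i = 0 \<Longrightarrow>
  \<forall>e\<in>M. c e \<in> B \<and> c e \<notin> I \<Longrightarrow> mpoly_eval M c xs \<notin> I"
  unfolding aim_def by blast

lemma ralgI: "finite D \<Longrightarrow> \<forall>i\<in>D. c i \<in> B \<Longrightarrow> i0 \<in> D \<Longrightarrow> c i0 \<notin> I \<Longrightarrow> (\<Sum>i\<in>D. c i * a ^ i) \<in> I \<Longrightarrow>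
  ralg I B a"
  unfolding ralg_def by blast

lemma aim_prefix:
  assumes "aim B I (xs @ ys)" shows "aim B I xs"
  unfolding aim_def
proof (intro allI impI)
  fix M :: "(nat \<Rightarrow> nat) set" and c assume H: "finite M \<and> M \<noteq> {} \<and> (\<forall>e\<in>M. \<forall>i\<ge>length xs. e i = 0) \<and> (\<forall>e\<in>M. c e \<in> B \<and> c e \<notin> I)"
  then have "mpoly_eval M c (xs @ ys) \<notin> I" using assms unfolding aim_def by auto
  then show "mpoly_eval M c xs \<notin> I" using H mpoly_eval_append_supp[of M xs c ys] by simp
qed

lemma drop_I:
  assumes "sring A" "idl A I" "B \<subseteq> A" "set xs \<subseteq> A" "finite M" "\<forall>e\<in>M. c e \<in> B"
  shows "mpoly_eval M c xs - mpoly_eval {e\<in>M. c e \<notin> I} c xs \<in> I"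
proof -
  have "mpoly_eval M c xs = (\<Sum>e\<in>M \<inter> {e. c e \<notin> I}. c e * mmon xs e) + (\<Sum>e\<in>M - {e. c e \<notin> I}. c e * mmon xs e)"
    unfolding mpoly_eval_mon by (rule sum.Int_Diff[OF assms(5)])
  moreover have "M \<inter> {e. c e \<notin> I} = {e\<in>M. c e \<notin> I}" by auto
  moreover have "(\<Sum>e\<in>M - {e. c e \<notin> I}. c e * mmon xs e) \<in> I"
    by (rule idl_sum[OF assms(2)]) (use assms(5) in simp, rule idl_mult2[OF assms(2)], use sring_mon[OF assms(1,4)] in auto)
  ultimately show ?thesis by (simp add: mpoly_eval_mon)
qed

definition gv :: "nat \<Rightarrow> nat \<Rightarrow> nat" where "gv i = (\<lambda>j. if j = 0 then i else 0)"

lemma aim_snoc_not_ralg: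
  assumes A: "sring A" "idl A I" "B \<subseteq> A" "set xs \<subseteq> A" "a \<in> A"
    and aim: "aim B I (xs @ [a])"
  shows "\<not> ralg I (polyset B xs) a"
proof
  assume "ralg I (polyset B xs) a"
  then obtain D cc where D: "finite D" "\<forall>i\<in>D. cc i \<in> polyset B xs" "\<exists>i\<in>D. cc i \<notin> I"
      "(\<Sum>i\<in>D. cc i * a ^ i) \<in> I"
    unfolding ralg_def by blast
  have "\<forall>i\<in>D. \<exists>Mc. cc i = mpoly_eval (fst Mc) (snd Mc) xs \<and> finite (fst Mc) \<and>
        (\<forall>e\<in>fst Mc. \<forall>j\<ge>length xs. e j = 0) \<and> (\<forall>e\<in>fst Mc. snd Mc e \<in> B)"
    using D(2) unfolding polyset_def by fastforce
  then obtain f where f: "\<forall>i\<in>D. cc i = mpoly_eval (fst (f i)) (snd (f i)) xs \<and> finite (fst (f i)) \<and>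
        (\<forall>e\<in>fst (f i). \<forall>j\<ge>length xs. e j = 0) \<and> (\<forall>e\<in>fst (f i). snd (f i) e \<in> B)"
    by (metis (no_types, lifting) bchoice)
  define p where "p = length xs"
  define Mf where "Mf i = fst (f i)" for i
  define cf where "cf i = snd (f i)" for i
  define M' where "M' i = {e\<in>Mf i. cf i e \<notin> I}" for i
  define emb where "emb i b = comb p b (gv i)" for i b
  define M where "M = (\<Union>i\<in>D. emb i ` M' i)"
  define C where "C e = cf (e p) (fstp p e)" for e
  have fM': "finite (M' i)" if "i \<in> D" for i using f that by (auto simp: M'_def Mf_def)
  have finM: "finite M" unfolding M_def using D(1) fM' by auto
  have emb_p: "emb i b p = i" for i b by (simp add: emb_def comb_def gv_def)
  have fst_emb: "fstp p (emb i b) = b" if "\<forall>j\<ge>p. b j = 0" for i b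
    unfolding emb_def using fstp_comb[OF that] .
  have suppM': "\<forall>j\<ge>p. b j = 0" if "i \<in> D" "b \<in> M' i" for i b
    using f that by (auto simp: M'_def Mf_def p_def)
  have supp: "\<forall>e\<in>M. \<forall>j\<ge>length (xs @ [a]). e j = 0"
    by (auto simp: M_def emb_def comb_def gv_def p_def)
  have coef: "\<forall>e\<in>M. C e \<in> B \<and> C e \<notin> I"
  proof
    fix e assume "e \<in> M"
    then obtain i b where ib: "i \<in> D" "b \<in> M' i" "e = emb i b" unfolding M_def by blast
    then have "C e = cf i b" using fst_emb[OF suppM'[OF ib(1,2)]] emb_p by (simp add: C_def)
    then show "C e \<in> B \<and> C e \<notin> I" using ib f by (auto simp: M'_def cf_def Mf_def)
  qed
  have inj: "inj_on (emb i) (M' i)" if "i \<in> D" for i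
    by (rule inj_onI) (metis fst_emb suppM' that)
  have disj: "\<forall>i\<in>D. \<forall>j\<in>D. i \<noteq> j \<longrightarrow> emb i ` M' i \<inter> emb j ` M' j = {}"
    by (auto dest: arg_cong[where f = "\<lambda>e. e p"] simp: emb_p)
  have mon_emb: "mmon (xs @ [a]) (emb i b) = mmon xs b * a ^ i" if "\<forall>j\<ge>p. b j = 0" for i b
    unfolding mon_append p_def[symmetric] fst_emb[OF that] mon_single
    by (simp add: emb_def sndp_comb gv_def)
  have "mpoly_eval M C (xs @ [a]) = (\<Sum>i\<in>D. \<Sum>e\<in>emb i ` M' i. C e * mmon (xs @ [a]) e)"
    unfolding mpoly_eval_mon M_def using D(1) fM' disj by (subst sum.UNION_disjoint) auto
  also have "\<dots> = (\<Sum>i\<in>D. mpoly_eval (M' i) (cf i) xs * a ^ i)"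
  proof (rule sum.cong[OF refl])
    fix i assume i: "i \<in> D"
    have "(\<Sum>e\<in>emb i ` M' i. C e * mmon (xs @ [a]) e) = (\<Sum>b\<in>M' i. C (emb i b) * mmon (xs @ [a]) (emb i b))"
      by (rule sum.reindex[OF inj[OF i], unfolded comp_def])
    also have "\<dots> = (\<Sum>b\<in>M' i. cf i b * mmon xs b * a ^ i)"
      by (rule sum.cong[OF refl]) (simp add: C_def emb_p fst_emb suppM'[OF i] mon_emb mult.assoc)
    finally show "(\<Sum>e\<in>emb i ` M' i. C e * mmon (xs @ [a]) e) = mpoly_eval (M' i) (cf i) xs * a ^ i"
      by (simp add: mpoly_eval_mon sum_distrib_right)
  qed
  finally have ev: "mpoly_eval M C (xs @ [a]) = (\<Sum>i\<in>D. mpoly_eval (M' i) (cf i) xs * a ^ i)" .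
  have dI: "cc i - mpoly_eval (M' i) (cf i) xs \<in> I" if "i \<in> D" for i
    using drop_I[OF A(1-4), of "Mf i" "cf i"] f that by (auto simp: M'_def Mf_def cf_def)
  have aA: "a ^ i \<in> A" for i using sring_power[OF A(1,5)] .
  have "(\<Sum>i\<in>D. cc i * a ^ i) - (\<Sum>i\<in>D. mpoly_eval (M' i) (cf i) xs * a ^ i)
        = (\<Sum>i\<in>D. (cc i - mpoly_eval (M' i) (cf i) xs) * a ^ i)"
    by (simp add: sum_subtractf left_diff_distrib)
  also have "\<dots> \<in> I" by (rule idl_sum[OF A(2) D(1)]) (use dI aA idl_mult2[OF A(2)] in blast)
  finally have d1: "(\<Sum>i\<in>D. cc i * a ^ i) - (\<Sum>i\<in>D. mpoly_eval (M' i) (cf i) xs * a ^ i) \<in> I" .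
  have "(\<Sum>i\<in>D. cc i * a ^ i) - ((\<Sum>i\<in>D. cc i * a ^ i) - (\<Sum>i\<in>D. mpoly_eval (M' i) (cf i) xs * a ^ i)) \<in> I"
    by (rule idl_diff[OF A(2) D(4) d1])
  then have "mpoly_eval M C (xs @ [a]) \<in> I" unfolding ev by simp
  moreover have "M \<noteq> {}"
  proof -
    obtain i0 where i0: "i0 \<in> D" "cc i0 \<notin> I" using D(3) by blast
    have "M' i0 \<noteq> {}"
    proof
      assume "M' i0 = {}"
      then have "cc i0 \<in> I" using dI[OF i0(1)] by (simp add: mpoly_eval_mon)
      then show False using i0 by simp
    qed
    then show ?thesis unfolding M_def using i0 by auto
  qed
  ultimately show False using aim finM supp coef unfolding aim_def by blast
qed


lemma aim_snoc_intro:
  assumes aimx: "aim B I xs" and nr: "\<not> ralg I (polyset B xs) a"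
  shows "aim B I (xs @ [a])"
  unfolding aim_def
proof (intro allI impI notI)
  fix M :: "(nat \<Rightarrow> nat) set" and c
  assume H: "finite M \<and> M \<noteq> {} \<and> (\<forall>e\<in>M. \<forall>i\<ge>length (xs @ [a]). e i = 0) \<and> (\<forall>e\<in>M. c e \<in> B \<and> c e \<notin> I)"
    and inI: "mpoly_eval M c (xs @ [a]) \<in> I"
  define p where "p = length xs"
  define G where "G = sndp p ` M"
  define F where "F g = fstp p ` {e\<in>M. sndp p e = g}" for g
  define Q where "Q g = mpoly_eval (F g) (\<lambda>b. c (comb p b g)) xs" for g
  have finM: "finite M" using H by blast
  have blk: "mpoly_eval M c (xs @ [a]) = (\<Sum>g\<in>G. Q g * mmon [a] g)"
    unfolding G_def Q_def F_def p_def by (rule mpoly_eval_block[OF finM])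
  have gG: "g = gv (g 0)" if gGa: "g \<in> G" for g
  proof
    fix j show "g j = gv (g 0) j"
    proof (cases "j = 0")
      case False
      obtain e where "e \<in> M" "g = sndp p e" using gGa G_def by blast
      then show ?thesis using H False by (auto simp: sndp_def gv_def p_def)
    qed (simp add: gv_def)
  qed
  have inj0: "inj_on (\<lambda>g. g 0) G" by (rule inj_onI) (metis gG)
  define D where "D = (\<lambda>g. g 0) ` G"
  define cc where "cc i = Q (gv i)" for i
  have "(\<Sum>i\<in>D. cc i * a ^ i) = (\<Sum>g\<in>G. cc (g 0) * a ^ (g 0))"
    unfolding D_def by (rule sum.reindex[OF inj0, unfolded comp_def])
  also have "\<dots> = (\<Sum>g\<in>G. Q g * mmon [a] g)"
    by (rule sum.cong[OF refl]) (metis cc_def gG mon_single)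
  finally have sumI: "(\<Sum>i\<in>D. cc i * a ^ i) \<in> I" using blk inI by simp
  have finF: "finite (F g)" for g using finM by (simp add: F_def)
  have Fsupp: "\<forall>b\<in>F g. \<forall>j\<ge>length xs. b j = 0" for g by (auto simp: F_def fstp_def p_def)
  have Fcoef: "\<forall>b\<in>F g. c (comb p b g) \<in> B \<and> c (comb p b g) \<notin> I" for g
  proof
    fix b assume "b \<in> F g"
    then obtain e where "e \<in> M" "sndp p e = g" "b = fstp p e" by (auto simp: F_def)
    then have "comb p b g = e" using comb_fst_snd by metis
    then show "c (comb p b g) \<in> B \<and> c (comb p b g) \<notin> I" using H \<open>e \<in> M\<close> by auto
  qed
  have ccP: "\<forall>i\<in>D. cc i \<in> polyset B xs"
  proof
    fix i assume "i \<in> D"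
    show "cc i \<in> polyset B xs" unfolding cc_def Q_def
      by (rule polysetI[OF finF Fsupp]) (use Fcoef in blast)
  qed
  have ccI: "\<forall>i\<in>D. cc i \<in> I"
  proof (rule ccontr)
    assume "\<not> (\<forall>i\<in>D. cc i \<in> I)"
    then obtain i0 where "i0 \<in> D" "cc i0 \<notin> I" by blast
    moreover have "finite D" using finM by (simp add: D_def G_def)
    ultimately have "ralg I (polyset B xs) a" using ccP sumI by (intro ralgI)
    then show False using nr by simp
  qed
  obtain e0 where e0: "e0 \<in> M" using H by blast
  define g0 where "g0 = sndp p e0"
  have g0G: "g0 \<in> G" using e0 by (simp add: G_def g0_def)
  have "g0 0 \<in> D" using g0G by (simp add: D_def)
  then have "cc (g0 0) \<in> I" using ccI by blast
  then have "Q g0 \<in> I" using gG[OF g0G] by (simp add: cc_def)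
  moreover have "F g0 \<noteq> {}" using e0 by (auto simp: F_def g0_def)
  ultimately show False using aimE[OF aimx finF _ Fsupp Fcoef] unfolding Q_def by blast
qed

lemma aim_perm:
  assumes aim: "aim B I xs" and ms: "mset ys = mset xs"
  shows "aim B I ys"
proof -
  obtain q where q: "q permutes {..<length xs}" "permute_list q xs = ys"
    using mset_eq_permutation[OF ms] by blast
  have len: "length ys = length xs" using q(2)[symmetric] by (simp add: permute_list_def)
  define n where "n = length xs"
  have ysn: "ys ! i = xs ! q i" if "i < n" for i
    using permute_list_nth[OF q(1)] that q(2) n_def by metis
  define f where "f e = (\<lambda>j. if j < n then e (inv_into UNIV q j) else 0)" for e :: "nat \<Rightarrow> nat"
  have monf: "mmon ys e = mmon xs (f e)" for e
  proof -
    have "mmon ys e = (\<Prod>i<n. xs ! q i ^ e i)" unfolding mmon_def len n_def[symmetric]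
      by (rule prod.cong) (auto simp: ysn)
    also have "\<dots> = (\<Prod>i<n. (\<lambda>j. xs ! j ^ e (inv_into UNIV q j)) (q i))"
      using permutes_inverses(2)[OF q(1)] by simp
    also have "\<dots> = (\<Prod>j<n. xs ! j ^ e (inv_into UNIV q j))"
      using prod.permute[OF q(1)[folded n_def], of "\<lambda>j. xs ! j ^ e (inv_into UNIV q j)"] by (simp add: comp_def)
    also have "\<dots> = mmon xs (f e)" unfolding mmon_def n_def[symmetric] by (rule prod.cong) (auto simp: f_def)
    finally show ?thesis .
  qed
  show ?thesis unfolding aim_def
  proof (intro allI impI)
    fix M :: "(nat \<Rightarrow> nat) set" and c
    assume H: "finite M \<and> M \<noteq> {} \<and> (\<forall>e\<in>M. \<forall>i\<ge>length ys. e i = 0) \<and> (\<forall>e\<in>M. c e \<in> B \<and> c e \<notin> I)"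
    have injf: "inj_on f M"
    proof (rule inj_onI)
      fix e1 e2 assume e: "e1 \<in> M" "e2 \<in> M" "f e1 = f e2"
      show "e1 = e2"
      proof
        fix i show "e1 i = e2 i"
        proof (cases "i < n")
          case True
          then have "q i < n" using permutes_in_image[OF q(1)] n_def by auto
          then have "f e1 (q i) = e1 i" "f e2 (q i) = e2 i"
            using permutes_inverses(2)[OF q(1)] by (auto simp: f_def)
          then show ?thesis using e(3) by metis
        next
          case False
          then have "i \<ge> length ys" using len n_def by simp
          then have "e1 i = 0" "e2 i = 0" using H e(1,2) by blast+
          then show ?thesis by simp
        qed
      qed
    qed
    define c' where "c' e' = c (inv_into M f e')" for e'
    have "mpoly_eval M c ys = (\<Sum>e\<in>M. c' (f e) * mmon xs (f e))"
      unfolding mpoly_eval_mon c'_def monf using inv_into_f_f[OF injf] by (intro sum.cong refl) simp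
    also have "\<dots> = mpoly_eval (f ` M) c' xs"
      unfolding mpoly_eval_mon by (rule sum.reindex[OF injf, symmetric, unfolded comp_def])
    finally have ev: "mpoly_eval M c ys = mpoly_eval (f ` M) c' xs" .
    have c1: "finite (f ` M)" "f ` M \<noteq> {}" using H by auto
    have c2: "\<forall>e\<in>f ` M. \<forall>i\<ge>length xs. e i = 0" by (auto simp: f_def n_def)
    have c3: "\<forall>e\<in>f ` M. c' e \<in> B \<and> c' e \<notin> I" using H by (auto simp: c'_def inv_into_f_f[OF injf])
    have "mpoly_eval (f ` M) c' xs \<notin> I"
      using aim c1 c2 c3 unfolding aim_def by blast
    then show "mpoly_eval M c ys \<notin> I" using ev by simp
  qed
qed



locale vr =
  fixes \<nu> :: "'a::field \<Rightarrow> int"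
  assumes dv: "discrete_valuation \<nu>"
begin

lemma vmult: "x \<noteq> 0 \<Longrightarrow> y \<noteq> 0 \<Longrightarrow> \<nu> (x * y) = \<nu> x + \<nu> y"
  using dv unfolding discrete_valuation_def by blast

lemma vadd: "x \<noteq> 0 \<Longrightarrow> y \<noteq> 0 \<Longrightarrow> x + y \<noteq> 0 \<Longrightarrow> \<nu> (x + y) \<ge> min (\<nu> x) (\<nu> y)"
  using dv unfolding discrete_valuation_def by blast

lemma vsurj: "\<exists>x. x \<noteq> 0 \<and> \<nu> x = z"
  using dv unfolding discrete_valuation_def by blast

lemma vone: "\<nu> 1 = 0"
  using vmult[of 1 1] by simp

lemma vinv: "x \<noteq> 0 \<Longrightarrow> \<nu> (inverse x) = - \<nu> x"
  using vmult[of x "inverse x"] vone by simp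

lemma vm1: "\<nu> (-1) = 0"
  using vmult[of "-1" "-1"] vone by simp

lemma vneg: "x \<noteq> 0 \<Longrightarrow> \<nu> (- x) = \<nu> x"
  using vmult[of "-1" x] vm1 by simp

lemma vdiv: "x \<noteq> 0 \<Longrightarrow> y \<noteq> 0 \<Longrightarrow> \<nu> (x / y) = \<nu> x - \<nu> y"
  using vmult[of x "inverse y"] vinv[of y] by (simp add: divide_inverse)

abbreviation "Rv \<equiv> val_ring \<nu>"
abbreviation "mv \<equiv> val_ideal \<nu>"

lemma Rv_iff: "x \<in> Rv \<longleftrightarrow> x = 0 \<or> \<nu> x \<ge> 0" by (simp add: val_ring_def)
lemma mv_iff: "x \<in> mv \<longleftrightarrow> x = 0 \<or> \<nu> x > 0" by (simp add: val_ideal_def)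

lemma Rv_add: "x \<in> Rv \<Longrightarrow> y \<in> Rv \<Longrightarrow> x + y \<in> Rv"
  unfolding Rv_iff
proof -
  assume "x = 0 \<or> 0 \<le> \<nu> x" "y = 0 \<or> 0 \<le> \<nu> y"
  then show "x + y = 0 \<or> 0 \<le> \<nu> (x + y)"
    by (cases "x = 0"; cases "y = 0"; cases "x + y = 0") (auto dest: vadd[of x y])
qed

lemma mv_add: "x \<in> mv \<Longrightarrow> y \<in> mv \<Longrightarrow> x + y \<in> mv"
  unfolding mv_iff
proof -
  assume "x = 0 \<or> 0 < \<nu> x" "y = 0 \<or> 0 < \<nu> y"
  then show "x + y = 0 \<or> 0 < \<nu> (x + y)"
    by (cases "x = 0"; cases "y = 0"; cases "x + y = 0") (auto dest: vadd[of x y])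
qed

lemma Rv_mult: "x \<in> Rv \<Longrightarrow> y \<in> Rv \<Longrightarrow> x * y \<in> Rv"
  unfolding Rv_iff by (cases "x = 0"; cases "y = 0") (auto simp: vmult)

lemma mv_mult: "x \<in> mv \<Longrightarrow> y \<in> Rv \<Longrightarrow> y * x \<in> mv"
  unfolding Rv_iff mv_iff by (cases "x = 0"; cases "y = 0") (auto simp: vmult)

lemma Rv_neg: "x \<in> Rv \<Longrightarrow> - x \<in> Rv"
  unfolding Rv_iff by (cases "x = 0") (auto simp: vneg)

lemma mv_neg: "x \<in> mv \<Longrightarrow> - x \<in> mv"
  unfolding mv_iff by (cases "x = 0") (auto simp: vneg)

lemma mv_Rv: "x \<in> mv \<Longrightarrow> x \<in> Rv"
  unfolding Rv_iff mv_iff by auto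

lemma one_Rv: "1 \<in> Rv" by (simp add: Rv_iff vone)
lemma one_not_mv: "1 \<notin> mv" by (simp add: mv_iff vone)
lemma zero_mv: "0 \<in> mv" by (simp add: mv_iff)

lemma sring_Rv: "sring Rv"
  unfolding sring_def using Rv_add Rv_mult Rv_neg one_Rv mv_Rv zero_mv by blast

lemma idl_mv: "idl Rv mv"
  unfolding idl_def using mv_add mv_neg mv_mult mv_Rv zero_mv by blast

lemma unit_Rv: "x \<in> Rv \<Longrightarrow> x \<notin> mv \<Longrightarrow> x \<noteq> 0 \<and> \<nu> x = 0"
  unfolding Rv_iff mv_iff by auto

lemma unit_inv: "x \<in> Rv \<Longrightarrow> x \<notin> mv \<Longrightarrow> inverse x \<in> Rv \<and> inverse x \<notin> mv"
  using unit_Rv[of x] vinv[of x] unfolding Rv_iff mv_iff by auto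

lemma mv_prime: "x \<in> Rv \<Longrightarrow> y \<in> Rv \<Longrightarrow> x * y \<in> mv \<Longrightarrow> x \<in> mv \<or> y \<in> mv"
  unfolding Rv_iff mv_iff by (cases "x = 0"; cases "y = 0") (auto simp: vmult)

lemma subfield_mv:
  assumes "is_subfield k" "k \<subseteq> Rv" "c \<in> k"
  shows "c \<in> mv \<longleftrightarrow> c = 0"
proof
  assume "c \<in> mv" show "c = 0"
  proof (rule ccontr)
    assume c0: "c \<noteq> 0"
    then have "inverse c \<in> k" using assms unfolding is_subfield_def by blast
    then have "inverse c \<in> Rv" using assms by blast
    then show False using \<open>c \<in> mv\<close> c0 vinv[of c] unfolding Rv_iff mv_iff by auto
  qed
qed (simp add: zero_mv)

end



lemma (in field) alg_trans:
  assumes sF: "subfield F R" and p: "polynomial F' p" "p \<noteq> []"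
    and palg: "set p \<subseteq> {y \<in> carrier R. (algebraic over F) y}"
    and x: "x \<in> carrier R" and ev: "eval p x = \<zero>"
  shows "(algebraic over F) x"
proof -
  have pc: "set p \<subseteq> carrier R" using palg by blast
  define F' where "F' = finite_extension F p"
  have sF': "subfield F' R" unfolding F'_def
    using finite_extension_is_subfield[OF sF pc] palg by blast
  have fd1: "finite_dimension F F'" unfolding F'_def
    using finite_extension_finite_dimension(1)[OF sF pc] palg by blast
  have "set p \<subseteq> F'" unfolding F'_def by (rule finite_extension_mem[OF subfieldE(1)[OF sF] pc])
  moreover have "lead_coeff p \<noteq> \<zero>" using p unfolding polynomial_def by simp
  ultimately have "p \<in> carrier (F'[X])" unfolding sym[OF univ_poly_carrier] polynomial_def by simp
  then have "(algebraic over F') x" using algebraicI[of p F' x] p(2) ev by simp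
  then have fd2: "finite_dimension F' (simple_extension F' x)"
    using finite_dimension_simple_extension[OF sF' x] by simp
  have fd3: "finite_dimension F (simple_extension F' x)"
    by (rule telescopic_base_dim(1)[OF sF sF' fd1 fd2])
  show ?thesis
    by (rule finite_dimension_imp_algebraic[OF sF simple_extension_is_subring[OF subfieldE(1)[OF sF'] x] fd3
          simple_extension_mem[OF subfieldE(1)[OF sF'] x]])
qed

context vr begin

definition R0 :: "'a ring" where
  "R0 = \<lparr>carrier = Rv, mult = (\<lambda>x y. x * y), one = 1, zero = 0, add = (\<lambda>x y. x + y)\<rparr>"

lemma R0_simps [simp]: "carrier R0 = Rv" "mult R0 = (\<lambda>x y. x * y)" "one R0 = 1" "zero R0 = 0"
  "add R0 = (\<lambda>x y. x + y)"
  by (simp_all add: R0_def)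

lemma cring_R0: "cring R0"
proof (rule cringI)
  show "abelian_group R0"
    by (rule abelian_groupI) (auto simp: Rv_add zero_mv mv_Rv intro!: bexI[of _ "- x" for x] Rv_neg)
  show "comm_monoid R0"
    by (rule comm_monoidI) (auto simp: Rv_mult one_Rv)
qed (simp add: distrib_right)

interpretation R0: cring R0 by (rule cring_R0)

lemma R0_ainv: "x \<in> Rv \<Longrightarrow> \<ominus>\<^bsub>R0\<^esub> x = - x"
  by (rule R0.minus_equality) (auto intro: Rv_neg)

lemma ideal_mv: "ideal mv R0"
proof (rule idealI)
  show "ring R0" by (rule R0.ring_axioms)
  show "subgroup mv (add_monoid R0)"
  proof
    show "mv \<subseteq> carrier (add_monoid R0)" using mv_Rv by auto
    show "x \<otimes>\<^bsub>add_monoid R0\<^esub> y \<in> mv" if "x \<in> mv" "y \<in> mv" for x y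
      using that mv_add by simp
    show "\<one>\<^bsub>add_monoid R0\<^esub> \<in> mv" using zero_mv by simp
    show "inv\<^bsub>add_monoid R0\<^esub> x \<in> mv" if "x \<in> mv" for x
      using that R0_ainv[of x] mv_Rv[of x] mv_neg[of x] unfolding a_inv_def by simp
  qed
  show "x \<otimes>\<^bsub>R0\<^esub> a \<in> mv" if "a \<in> mv" "x \<in> carrier R0" for a x using that mv_mult by simp
  show "a \<otimes>\<^bsub>R0\<^esub> x \<in> mv" if "a \<in> mv" "x \<in> carrier R0" for a x using that mv_mult[of a x]
    by (simp add: mult.commute)
qed

lemma maximal_mv: "maximalideal mv R0"
proof (rule maximalidealI[OF ideal_mv])
  show "carrier R0 \<noteq> mv" using one_Rv one_not_mv by auto
  fix J assume J: "ideal J R0" "mv \<subseteq> J" "J \<subseteq> carrier R0"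
  show "J = mv \<or> J = carrier R0"
  proof (cases "J = mv")
    case False
    then obtain u where u: "u \<in> J" "u \<notin> mv" using J(2) by blast
    then have uR: "u \<in> Rv" using J(3) by auto
    have "inverse u * u \<in> J"
      using ideal.I_l_closed[OF J(1) u(1), of "inverse u"] unit_inv[OF uR u(2)] by simp
    then have one: "1 \<in> J" using unit_Rv[OF uR u(2)] by simp
    have "carrier R0 \<subseteq> J"
    proof
      fix x assume "x \<in> carrier R0"
      then show "x \<in> J" using ideal.I_l_closed[OF J(1) one, of x] by simp
    qed
    then show ?thesis using J(3) by blast
  qed simp
qed

definition kap :: "'a set ring" where "kap = R0 Quot mv"
definition hh :: "'a \<Rightarrow> 'a set" where "hh x = mv +>\<^bsub>R0\<^esub> x"

lemma field_kap: "field kap"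
  unfolding kap_def by (rule maximalideal.quotient_is_field[OF maximal_mv cring_R0])

interpretation kap: field kap by (rule field_kap)

lemma hom_hh: "ring_hom_ring R0 kap hh"
proof -
  have "hh = (+>\<^bsub>R0\<^esub>) mv" by (rule ext) (simp add: hh_def)
  then show ?thesis unfolding kap_def using ideal.rcos_ring_hom_ring[OF ideal_mv] by simp
qed

interpretation hh: ring_hom_ring R0 kap hh by (rule hom_hh)

lemma hh_add: "x \<in> Rv \<Longrightarrow> y \<in> Rv \<Longrightarrow> hh (x + y) = hh x \<oplus>\<^bsub>kap\<^esub> hh y"
  using hh.hom_add[of x y] by simp
lemma hh_mult: "x \<in> Rv \<Longrightarrow> y \<in> Rv \<Longrightarrow> hh (x * y) = hh x \<otimes>\<^bsub>kap\<^esub> hh y"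
  using hh.hom_mult[of x y] by simp
lemma hh_one: "hh 1 = \<one>\<^bsub>kap\<^esub>"
  using hh.hom_one by simp
lemma hh_carrier: "x \<in> Rv \<Longrightarrow> hh x \<in> carrier kap"
  using hh.hom_closed[of x] by simp
lemma hh_pow: "x \<in> Rv \<Longrightarrow> hh (x ^ n) = hh x [^]\<^bsub>kap\<^esub> n"
proof (induction n)
  case 0 then show ?case using hh_one by simp
next
  case (Suc n)
  have "hh (x ^ Suc n) = hh (x ^ n * x)" by (simp add: mult.commute)
  also have "\<dots> = hh (x ^ n) \<otimes>\<^bsub>kap\<^esub> hh x"
    by (rule hh_mult) (use Suc sring_power[OF sring_Rv] in auto)
  finally show ?case using Suc by simp
qed

lemma hh_zero_iff: "x \<in> Rv \<Longrightarrow> hh x = \<zero>\<^bsub>kap\<^esub> \<longleftrightarrow> x \<in> mv"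
proof -
  assume x: "x \<in> Rv"
  interpret I: ideal mv R0 by (rule ideal_mv)
  have z: "\<zero>\<^bsub>kap\<^esub> = mv" by (simp add: kap_def FactRing_def)
  show ?thesis
  proof
    assume "hh x = \<zero>\<^bsub>kap\<^esub>"
    then have "mv +>\<^bsub>R0\<^esub> x = mv" using z hh_def by simp
    moreover have "x \<in> mv +>\<^bsub>R0\<^esub> x" using I.a_rcos_self[of x] x by simp
    ultimately show "x \<in> mv" by simp
  next
    assume "x \<in> mv" then show "hh x = \<zero>\<^bsub>kap\<^esub>" using z I.a_rcos_const[of x] hh_def by simp
  qed
qed

lemma kap_carrier: "carrier kap = hh ` Rv"
  by (auto simp: kap_def FactRing_def A_RCOSETS_def RCOSETS_def a_r_coset_def hh_def)

end



fun peval :: "'a::field list \<Rightarrow> 'a \<Rightarrow> 'a" where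
  "peval [] a = 0"
| "peval (b # bs) a = b * a ^ length bs + peval bs a"

lemma peval_sum: "peval (rev (map c [0..<N])) a = (\<Sum>i<N. c i * a ^ i)"
proof (induction N)
  case (Suc N)
  have "rev (map c [0..<Suc N]) = c N # rev (map c [0..<N])" by simp
  then show ?case using Suc by (simp add: add.commute)
qed simp

lemma peval_rev: "peval bs a = (\<Sum>i<length bs. rev bs ! i * a ^ i)"
  using peval_sum[of "(!) (rev bs)" "length (rev bs)" a] unfolding map_nth by simp

lemma peval_in: "sring S \<Longrightarrow> set bs \<subseteq> S \<Longrightarrow> a \<in> S \<Longrightarrow> peval bs a \<in> S"
  by (induction bs) (auto simp: sring_def sring_power)

lemma list_lift: "set p \<subseteq> f ` Y \<Longrightarrow> \<exists>bs. set bs \<subseteq> Y \<and> map f bs = p"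
proof (induction p)
  case (Cons y p)
  then obtain bs where "set bs \<subseteq> Y" "map f bs = p" by auto
  moreover obtain b where "b \<in> Y" "f b = y" using Cons(2) by auto
  ultimately show ?case by (intro exI[of _ "b # bs"]) auto
qed simp

lemma ralg_mono: "B \<subseteq> B' \<Longrightarrow> ralg I B a \<Longrightarrow> ralg I B' a"
  unfolding ralg_def by blast

lemma (in ring) normalize_nil: "normalize p = [] \<Longrightarrow> set p \<subseteq> {\<zero>}"
proof (induction p)
  case (Cons x p)
  then show ?case by (cases "x = \<zero>") auto
qed simp

context vr begin

interpretation R0: cring R0 by (rule cring_R0)
interpretation kap: field kap by (rule field_kap)
interpretation hh: ring_hom_ring R0 kap hh by (rule hom_hh)

lemma eval_hh: "set bs \<subseteq> Rv \<Longrightarrow> a \<in> Rv \<Longrightarrow> kap.eval (map hh bs) (hh a) = hh (peval bs a)"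
proof (induction bs)
  case Nil then show ?case using hh.hom_zero by simp
next
  case (Cons b bs)
  have bR: "b \<in> Rv" and bsR: "set bs \<subseteq> Rv" using Cons by auto
  have pw: "a ^ length bs \<in> Rv" using sring_power[OF sring_Rv Cons(3)] .
  have pe: "peval bs a \<in> Rv" using peval_in[OF sring_Rv bsR Cons(3)] .
  have "kap.eval (map hh (b # bs)) (hh a) = hh b \<otimes>\<^bsub>kap\<^esub> (hh a [^]\<^bsub>kap\<^esub> length bs) \<oplus>\<^bsub>kap\<^esub> kap.eval (map hh bs) (hh a)"
    by simp
  also have "\<dots> = hh (b * a ^ length bs + peval bs a)"
    using Cons(1)[OF bsR Cons(3)] hh_pow[OF Cons(3)] hh_mult[OF bR pw] hh_add[OF Rv_mult[OF bR pw] pe] by simp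
  finally show ?case by simp
qed

lemma bridge1:
  assumes Y: "Y \<subseteq> Rv" "0 \<in> Y" and a: "a \<in> Rv" and ra: "ralg mv Y a"
  shows "\<exists>p. polynomial\<^bsub>kap\<^esub> (hh ` Y) p \<and> p \<noteq> [] \<and> kap.eval p (hh a) = \<zero>\<^bsub>kap\<^esub>"
proof -
  obtain D c i0 where D: "finite D" "\<forall>i\<in>D. c i \<in> Y" "i0 \<in> D" "c i0 \<notin> mv" "(\<Sum>i\<in>D. c i * a ^ i) \<in> mv"
    using ra unfolding ralg_def by blast
  define N where "N = Suc (Max D)"
  have DN: "D \<subseteq> {..<N}" using D(1) by (auto simp: N_def less_Suc_eq_le)
  define c' where "c' i = (if i \<in> D then c i else 0)" for i
  define bs where "bs = rev (map c' [0..<N])"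
  have bsX: "set bs \<subseteq> Y" using D(2) Y(2) by (auto simp: bs_def c'_def)
  have bsR: "set bs \<subseteq> Rv" using bsX Y(1) by blast
  have "peval bs a = (\<Sum>i<N. c' i * a ^ i)" unfolding bs_def by (rule peval_sum)
  also have "\<dots> = (\<Sum>i\<in>D. c i * a ^ i)"
    by (rule sum.mono_neutral_cong_right) (use DN in \<open>auto simp: c'_def\<close>)
  finally have "peval bs a \<in> mv" using D(5) by simp
  then have ev0: "kap.eval (map hh bs) (hh a) = \<zero>\<^bsub>kap\<^esub>"
    using eval_hh[OF bsR a] hh_zero_iff peval_in[OF sring_Rv bsR a] by simp
  define p where "p = kap.normalize (map hh bs)"
  have mc: "set (map hh bs) \<subseteq> carrier kap" using bsR hh_carrier by auto
  have "kap.eval p (hh a) = \<zero>\<^bsub>kap\<^esub>"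
    unfolding p_def using kap.eval_normalize[OF mc hh_carrier[OF a]] ev0 by simp
  moreover have "polynomial\<^bsub>kap\<^esub> (hh ` Y) p"
    unfolding p_def by (rule kap.normalize_gives_polynomial) (use bsX in auto)
  moreover have "p \<noteq> []"
  proof
    assume "p = []"
    then have "set (map hh bs) \<subseteq> {\<zero>\<^bsub>kap\<^esub>}" using kap.normalize_nil[of "map hh bs"] p_def by simp
    moreover have "c i0 \<in> set bs" using D(3) DN by (force simp: bs_def c'_def)
    ultimately have "hh (c i0) = \<zero>\<^bsub>kap\<^esub>" by auto
    then show False using hh_zero_iff D(2,3,4) Y(1) by blast
  qed
  ultimately show ?thesis by blast
qed

lemma bridge2:
  assumes Y: "Y \<subseteq> Rv" and sub: "subring (hh ` Y) kap" and a: "a \<in> Rv"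
    and alg: "(ring.algebraic kap over (hh ` Y)) (hh a)"
  shows "ralg mv Y a"
proof -
  obtain p where p: "p \<in> carrier ((hh ` Y) [X]\<^bsub>kap\<^esub>)" "p \<noteq> []" "kap.eval p (hh a) = \<zero>\<^bsub>kap\<^esub>"
    by (rule kap.algebraicE[OF sub hh_carrier[OF a] alg])
  have pol: "polynomial\<^bsub>kap\<^esub> (hh ` Y) p" using p(1) by (simp only: univ_poly_carrier[symmetric])
  then have ps: "set p \<subseteq> hh ` Y" and lc: "hd p \<noteq> \<zero>\<^bsub>kap\<^esub>" using p(2) unfolding polynomial_def by simp_all
  obtain bs where bs: "set bs \<subseteq> Y" "map hh bs = p" using list_lift[OF ps] by (elim exE conjE)
  have bsR: "set bs \<subseteq> Rv" using bs Y by (meson order_trans)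
  have "hh (peval bs a) = \<zero>\<^bsub>kap\<^esub>" using eval_hh[OF bsR a] bs(2) p(3) by simp
  then have pm: "peval bs a \<in> mv" using hh_zero_iff[OF peval_in[OF sring_Rv bsR a]] by simp
  have bsne: "bs \<noteq> []" using bs(2) p(2) by auto
  define n where "n = length bs"
  have n0: "n > 0" using bsne by (simp add: n_def)
  have "rev bs ! (n - 1) = bs ! 0" using n0 by (simp add: n_def rev_nth)
  also have "\<dots> = hd bs" using bsne by (simp add: hd_conv_nth)
  finally have rh: "rev bs ! (n - 1) = hd bs" .
  have "hh (hd bs) = hd p" using bs(2) bsne by (cases bs) auto
  then have "hh (hd bs) \<noteq> \<zero>\<^bsub>kap\<^esub>" using lc by simp
  moreover have "hd bs \<in> Rv" using bsne bsR by (simp add: subset_iff)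
  ultimately have c0: "rev bs ! (n - 1) \<notin> mv" using hh_zero_iff rh by simp
  have c1: "\<forall>i\<in>{..<n}. rev bs ! i \<in> Y"
  proof
    fix i assume "i \<in> {..<n}"
    then have "rev bs ! i \<in> set (rev bs)" by (intro nth_mem) (simp add: n_def)
    then show "rev bs ! i \<in> Y" using bs(1) by auto
  qed
  have c2: "n - 1 \<in> {..<n}" using n0 by simp
  have c3: "(\<Sum>i\<in>{..<n}. rev bs ! i * a ^ i) \<in> mv" using pm unfolding peval_rev n_def .
  show ?thesis by (rule ralgI[OF _ c1 c2 c0 c3]) simp
qed

end



context vr begin

interpretation R0: cring R0 by (rule cring_R0)
interpretation kap: field kap by (rule field_kap)
interpretation hh: ring_hom_ring R0 kap hh by (rule hom_hh)

lemma hh_neg: "x \<in> Rv \<Longrightarrow> hh (- x) = \<ominus>\<^bsub>kap\<^esub> hh x"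
proof -
  assume x: "x \<in> Rv"
  have "hh (- x) \<oplus>\<^bsub>kap\<^esub> hh x = hh (- x + x)" using hh_add[OF Rv_neg[OF x] x] by simp
  also have "\<dots> = \<zero>\<^bsub>kap\<^esub>" using hh_zero_iff[of 0] zero_mv mv_Rv by simp
  finally show ?thesis
    by (intro kap.minus_equality[symmetric]) (auto intro: hh_carrier x Rv_neg)
qed

definition Fr :: "'a set \<Rightarrow> 'a set" where
  "Fr P = {p * inverse q | p q. p \<in> P \<and> q \<in> P \<and> q \<notin> mv}"

lemma FrI: "p \<in> P \<Longrightarrow> q \<in> P \<Longrightarrow> q \<notin> mv \<Longrightarrow> p * inverse q \<in> Fr P"
  unfolding Fr_def by blast

lemma FrE: "x \<in> Fr P \<Longrightarrow> (\<And>p q. p \<in> P \<Longrightarrow> q \<in> P \<Longrightarrow> q \<notin> mv \<Longrightarrow> x = p * inverse q \<Longrightarrow> thesis) \<Longrightarrow> thesis"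
  unfolding Fr_def by blast

lemma prod_notin_mv: "finite D \<Longrightarrow> (\<And>i. i \<in> D \<Longrightarrow> f i \<in> Rv \<and> f i \<notin> mv) \<Longrightarrow> prod f D \<notin> mv"
proof (induction D rule: finite_induct)
  case empty then show ?case using one_not_mv by simp
next
  case (insert x F)
  have "prod f F \<in> Rv" using insert sring_prod[OF sring_Rv, of F f] by blast
  then show ?case using insert mv_prime[of "f x" "prod f F"] by auto
qed

context
  fixes P assumes sP: "sring P" and PR: "P \<subseteq> Rv"
begin

lemma Fr_Rv: "x \<in> Fr P \<Longrightarrow> x \<in> Rv"
  by (erule FrE) (use PR unit_inv Rv_mult in blast)

lemma P_Fr: "x \<in> P \<Longrightarrow> x \<in> Fr P"
  using FrI[of x P 1] sP one_not_mv unfolding sring_def by simp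

lemma qnz: "q \<in> P \<Longrightarrow> q \<notin> mv \<Longrightarrow> q \<noteq> 0"
  using zero_mv by auto

lemma Fr_add: "x \<in> Fr P \<Longrightarrow> y \<in> Fr P \<Longrightarrow> x + y \<in> Fr P"
proof -
  assume "x \<in> Fr P" "y \<in> Fr P"
  then obtain p q p' q' where pq: "p \<in> P" "q \<in> P" "q \<notin> mv" "x = p * inverse q"
    "p' \<in> P" "q' \<in> P" "q' \<notin> mv" "y = p' * inverse q'" by (metis FrE)
  have "x + y = (p * q' + p' * q) * inverse (q * q')"
    using pq qnz by (simp add: field_simps)
  moreover have "q * q' \<notin> mv" using pq PR mv_prime by blast
  moreover have "p * q' + p' * q \<in> P" "q * q' \<in> P" using pq sP unfolding sring_def by blast+
  ultimately show ?thesis using FrI by metis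
qed

lemma Fr_mult: "x \<in> Fr P \<Longrightarrow> y \<in> Fr P \<Longrightarrow> x * y \<in> Fr P"
proof -
  assume "x \<in> Fr P" "y \<in> Fr P"
  then obtain p q p' q' where pq: "p \<in> P" "q \<in> P" "q \<notin> mv" "x = p * inverse q"
    "p' \<in> P" "q' \<in> P" "q' \<notin> mv" "y = p' * inverse q'" by (metis FrE)
  have "x * y = (p * p') * inverse (q * q')"
    using pq by (simp add: inverse_mult_distrib mult_ac)
  moreover have "q * q' \<notin> mv" using pq PR mv_prime by blast
  moreover have "p * p' \<in> P" "q * q' \<in> P" using pq sP unfolding sring_def by blast+
  ultimately show ?thesis using FrI by metis
qed

lemma Fr_neg: "x \<in> Fr P \<Longrightarrow> - x \<in> Fr P"
proof -
  assume "x \<in> Fr P"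
  then obtain p q where pq: "p \<in> P" "q \<in> P" "q \<notin> mv" "x = p * inverse q" by (metis FrE)
  have "- x = (- p) * inverse q" using pq by simp
  moreover have "- p \<in> P" using pq sP unfolding sring_def by blast
  ultimately show ?thesis using FrI pq by metis
qed

lemma Fr_inv: "x \<in> Fr P \<Longrightarrow> x \<notin> mv \<Longrightarrow> inverse x \<in> Fr P"
proof -
  assume x: "x \<in> Fr P" "x \<notin> mv"
  then obtain p q where pq: "p \<in> P" "q \<in> P" "q \<notin> mv" "x = p * inverse q" by (metis FrE)
  have "p \<notin> mv"
  proof
    assume "p \<in> mv"
    then have "inverse q * p \<in> mv" using mv_mult unit_inv pq PR by blast
    then show False using x(2) pq(4) by (simp add: mult.commute)
  qed
  moreover have "inverse x = q * inverse p" using pq by simp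
  ultimately show ?thesis using FrI pq by metis
qed

lemma sring_Fr: "sring (Fr P)"
  unfolding sring_def using Fr_add Fr_mult Fr_neg P_Fr sP unfolding sring_def by blast

lemma clear_denom:
  assumes a: "a \<in> Rv" and ra: "ralg mv (Fr P) a"
  shows "ralg mv P a"
proof -
  obtain D c i0 where D: "finite D" "\<forall>i\<in>D. c i \<in> Fr P" "i0 \<in> D" "c i0 \<notin> mv" "(\<Sum>i\<in>D. c i * a ^ i) \<in> mv"
    using ra unfolding ralg_def by blast
  have "\<forall>i\<in>D. \<exists>pq. fst pq \<in> P \<and> snd pq \<in> P \<and> snd pq \<notin> mv \<and> c i = fst pq * inverse (snd pq)"
    using D(2) by (metis FrE fst_conv snd_conv)
  then obtain f where f: "\<forall>i\<in>D. fst (f i) \<in> P \<and> snd (f i) \<in> P \<and> snd (f i) \<notin> mv \<and> c i = fst (f i) * inverse (snd (f i))"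
    by (metis (no_types, lifting) bchoice)
  define Q where "Q = (\<Prod>i\<in>D. snd (f i))"
  have QP: "Q \<in> P" unfolding Q_def by (rule sring_prod[OF sP D(1)]) (use f in blast)
  have QR: "Q \<in> Rv" using QP PR by blast
  have Qm: "Q \<notin> mv" unfolding Q_def by (rule prod_notin_mv[OF D(1)]) (use f PR in blast)
  define c' where "c' i = Q * c i" for i
  have c'P: "c' i \<in> P" if i: "i \<in> D" for i
  proof -
    have "Q = snd (f i) * (\<Prod>j\<in>D - {i}. snd (f j))" unfolding Q_def using D(1) i by (rule prod.remove)
    then have "c' i = fst (f i) * (\<Prod>j\<in>D - {i}. snd (f j))"
      using f i qnz[of "snd (f i)"] by (simp add: c'_def field_simps)
    moreover have "(\<Prod>j\<in>D - {i}. snd (f j)) \<in> P" by (rule sring_prod[OF sP]) (use D(1) f in auto)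
    ultimately show ?thesis using f i sP unfolding sring_def by metis
  qed
  have "(\<Sum>i\<in>D. c' i * a ^ i) = Q * (\<Sum>i\<in>D. c i * a ^ i)"
    by (simp add: c'_def sum_distrib_left mult.assoc)
  also have "\<dots> \<in> mv" using mv_mult[OF D(5) QR] .
  finally have s: "(\<Sum>i\<in>D. c' i * a ^ i) \<in> mv" .
  have "c' i0 \<notin> mv" unfolding c'_def using mv_prime[of Q "c i0"] Qm D(2,3,4) QR Fr_Rv by blast
  then show ?thesis using c'P D(1,3) s unfolding ralg_def by blast
qed

lemma subfield_Fr: "subfield (hh ` Fr P) kap"
proof (rule kap.subfieldI'[OF kap.subringI])
  show "hh ` Fr P \<subseteq> carrier kap" using hh_carrier Fr_Rv by (meson image_subsetI)
  have "1 \<in> Fr P" using P_Fr sP unfolding sring_def by blast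
  then show "\<one>\<^bsub>kap\<^esub> \<in> hh ` Fr P" using hh_one by (metis imageI)
  show "\<ominus>\<^bsub>kap\<^esub> h \<in> hh ` Fr P" if hA: "h \<in> hh ` Fr P" for h
  proof -
    obtain x where x: "x \<in> Fr P" "h = hh x" using hA by (elim imageE)
    then have "\<ominus>\<^bsub>kap\<^esub> h = hh (- x)" using hh_neg[OF Fr_Rv[OF x(1)]] by simp
    then show ?thesis using Fr_neg[OF x(1)] by simp
  qed
  show "h1 \<otimes>\<^bsub>kap\<^esub> h2 \<in> hh ` Fr P" if hA: "h1 \<in> hh ` Fr P" and hB: "h2 \<in> hh ` Fr P" for h1 h2
  proof -
    obtain x where x: "x \<in> Fr P" "h1 = hh x" using hA by (elim imageE)
    obtain y where y: "y \<in> Fr P" "h2 = hh y" using hB by (elim imageE)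
    have "h1 \<otimes>\<^bsub>kap\<^esub> h2 = hh (x * y)" using hh_mult[OF Fr_Rv[OF x(1)] Fr_Rv[OF y(1)]] x y by simp
    then show ?thesis using Fr_mult[OF x(1) y(1)] by simp
  qed
  show "h1 \<oplus>\<^bsub>kap\<^esub> h2 \<in> hh ` Fr P" if hA: "h1 \<in> hh ` Fr P" and hB: "h2 \<in> hh ` Fr P" for h1 h2
  proof -
    obtain x where x: "x \<in> Fr P" "h1 = hh x" using hA by (elim imageE)
    obtain y where y: "y \<in> Fr P" "h2 = hh y" using hB by (elim imageE)
    have "h1 \<oplus>\<^bsub>kap\<^esub> h2 = hh (x + y)" using hh_add[OF Fr_Rv[OF x(1)] Fr_Rv[OF y(1)]] x y by simp
    then show ?thesis using Fr_add[OF x(1) y(1)] by simp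
  qed
  show "inv\<^bsub>kap\<^esub> k \<in> hh ` Fr P" if kA: "k \<in> hh ` Fr P - {\<zero>\<^bsub>kap\<^esub>}" for k
  proof -
    obtain x where x: "x \<in> Fr P" "k = hh x" using kA by (elim DiffE imageE)
    have xR: "x \<in> Rv" using Fr_Rv x by blast
    have xm: "x \<notin> mv" using kA x hh_zero_iff[OF xR] by simp
    have ix: "inverse x \<in> Fr P" using Fr_inv x xm by blast
    have "hh x \<otimes>\<^bsub>kap\<^esub> hh (inverse x) = hh (x * inverse x)" using hh_mult[OF xR Fr_Rv[OF ix]] by simp
    also have "\<dots> = \<one>\<^bsub>kap\<^esub>" using hh_one unit_Rv[OF xR xm] by simp
    finally have "inv\<^bsub>kap\<^esub> (hh x) = hh (inverse x)"
      by (rule kap.comm_inv_char[OF hh_carrier[OF xR] hh_carrier[OF Fr_Rv[OF ix]]])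
    then show ?thesis using x ix by simp
  qed
qed

end

end



context vr begin

interpretation R0: cring R0 by (rule cring_R0)
interpretation kap: field kap by (rule field_kap)
interpretation hh: ring_hom_ring R0 kap hh by (rule hom_hh)

definition clv :: "'a set \<Rightarrow> 'a set" where "clv P = {a \<in> Rv. ralg mv P a}"
definition AlgP :: "'a set \<Rightarrow> 'a set set" where
  "AlgP P = {y \<in> carrier kap. (ring.algebraic kap over (hh ` Fr P)) y}"

context
  fixes P assumes sP: "sring P" and PR: "P \<subseteq> Rv"
begin

lemma zero_Fr: "0 \<in> Fr P" using P_Fr[OF sP PR] sP unfolding sring_def by blast

lemma FrR: "Fr P \<subseteq> Rv" using Fr_Rv[OF sP PR] by blast

lemma clv_iff: "a \<in> Rv \<Longrightarrow> ralg mv P a \<longleftrightarrow> hh a \<in> AlgP P"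
proof
  assume a: "a \<in> Rv" and r: "ralg mv P a"
  have "ralg mv (Fr P) a" by (rule ralg_mono[OF _ r]) (use P_Fr[OF sP PR] in blast)
  from bridge1[OF FrR zero_Fr a this] obtain p where
    p: "polynomial\<^bsub>kap\<^esub> (hh ` Fr P) p" "p \<noteq> []" "kap.eval p (hh a) = \<zero>\<^bsub>kap\<^esub>"
    by (elim exE conjE)
  have "p \<in> carrier ((hh ` Fr P) [X]\<^bsub>kap\<^esub>)" using p(1) by (simp only: univ_poly_carrier)
  then have "(ring.algebraic kap over (hh ` Fr P)) (hh a)" by (rule kap.algebraicI[OF _ p(2,3)])
  then show "hh a \<in> AlgP P" unfolding AlgP_def using hh_carrier[OF a] by simp
next
  assume a: "a \<in> Rv" and h: "hh a \<in> AlgP P"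
  have "ralg mv (Fr P) a"
    by (rule bridge2[OF FrR subfieldE(1)[OF subfield_Fr[OF sP PR]] a]) (use h in \<open>simp add: AlgP_def\<close>)
  then show "ralg mv P a" by (rule clear_denom[OF sP PR a])
qed

lemma subfield_AlgP: "subfield (AlgP P) kap"
  unfolding AlgP_def by (rule kap.subfield_of_algebraics[OF subfield_Fr[OF sP PR]])

lemma clv_mem: "a \<in> clv P \<longleftrightarrow> a \<in> Rv \<and> hh a \<in> AlgP P"
  unfolding clv_def using clv_iff by blast

lemma clv_add: "a \<in> clv P \<Longrightarrow> b \<in> clv P \<Longrightarrow> a + b \<in> clv P"
  unfolding clv_mem using hh_add subringE(7)[OF subfieldE(1)[OF subfield_AlgP]] Rv_add by metis

lemma clv_mult: "a \<in> clv P \<Longrightarrow> b \<in> clv P \<Longrightarrow> a * b \<in> clv P"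
  unfolding clv_mem using hh_mult subringE(6)[OF subfieldE(1)[OF subfield_AlgP]] Rv_mult by metis

lemma clv_neg: "a \<in> clv P \<Longrightarrow> - a \<in> clv P"
  unfolding clv_mem using hh_neg subringE(5)[OF subfieldE(1)[OF subfield_AlgP]] Rv_neg by metis

lemma P_clv: "b \<in> P \<Longrightarrow> b \<in> clv P"
proof -
  assume b: "b \<in> P"
  define c where "c i = (if i = 0 then - b else 1)" for i :: nat
  have "(\<Sum>i\<in>{0,1::nat}. c i * b ^ i) = 0" by (simp add: c_def)
  then have "ralg mv P b"
    using sP b zero_mv one_not_mv unfolding sring_def
    by (intro ralgI[of "{0,1}" c P 1]) (auto simp: c_def)
  then show ?thesis unfolding clv_def using b PR by blast
qed

lemma sring_clv: "sring (clv P)"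
  unfolding sring_def using P_clv clv_add clv_mult clv_neg sP unfolding sring_def by blast

lemma clv_Rv: "clv P \<subseteq> Rv" unfolding clv_def by blast

lemma clv_trans:
  assumes E: "E \<subseteq> Rv" "0 \<in> E" "E \<subseteq> clv P" and a: "a \<in> Rv" and r: "ralg mv E a"
  shows "a \<in> clv P"
proof -
  obtain p where p: "polynomial\<^bsub>kap\<^esub> (hh ` E) p" "p \<noteq> []" "kap.eval p (hh a) = \<zero>\<^bsub>kap\<^esub>"
    using bridge1[OF E(1,2) a r] by (elim exE conjE)
  have "set p \<subseteq> hh ` E" using p(1) unfolding polynomial_def using p(2) by simp
  also have "\<dots> \<subseteq> AlgP P" using E(3) clv_mem by blast
  finally have sp: "set p \<subseteq> {y \<in> carrier kap. (ring.algebraic kap over (hh ` Fr P)) y}"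
    unfolding AlgP_def .
  have "(ring.algebraic kap over (hh ` Fr P)) (hh a)"
    by (rule kap.alg_trans[OF subfield_Fr[OF sP PR] p(1) p(2) sp hh_carrier[OF a] p(3)])
  then show ?thesis unfolding clv_mem AlgP_def using a hh_carrier[OF a] by simp
qed

end

end



lemma sring_subfield: "is_subfield k \<Longrightarrow> sring k"
  unfolding is_subfield_def sring_def by blast

locale vrk = vr +
  fixes k :: "'a set"
  assumes sk: "is_subfield k" and kR: "k \<subseteq> Rv"
begin

lemma sring_k: "sring k" by (rule sring_subfield[OF sk])

definition CL :: "'a list \<Rightarrow> 'a set" where "CL xs = clv (polyset k xs)"

lemma polyset_R: "set xs \<subseteq> Rv \<Longrightarrow> polyset k xs \<subseteq> Rv"
  by (rule polyset_min[OF sring_Rv kR])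

lemma sring_P: "sring (polyset k xs)" by (rule sring_polyset[OF sring_k])

lemma CL_iff: "a \<in> CL xs \<longleftrightarrow> a \<in> Rv \<and> ralg mv (polyset k xs) a"
  by (simp add: CL_def clv_def)

lemma CL_R: "CL xs \<subseteq> Rv" by (auto simp: CL_iff)

lemma aim_snoc_iff:
  assumes xs: "set xs \<subseteq> Rv" and a: "a \<in> Rv"
  shows "aim k mv (xs @ [a]) \<longleftrightarrow> aim k mv xs \<and> a \<notin> CL xs"
proof
  assume h: "aim k mv (xs @ [a])"
  show "aim k mv xs \<and> a \<notin> CL xs"
    using aim_prefix[OF h] aim_snoc_not_ralg[OF sring_Rv idl_mv kR xs a h] by (simp add: CL_iff)
next
  assume "aim k mv xs \<and> a \<notin> CL xs"
  then show "aim k mv (xs @ [a])" using aim_snoc_intro[of k mv xs a] a by (simp add: CL_iff)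
qed

lemma polyset_set_eq: "set xs = set ys \<Longrightarrow> polyset k xs = polyset k ys"
  by (intro equalityI polyset_set_mono[OF sring_k]) auto

lemma CL_set_eq: "set xs = set ys \<Longrightarrow> CL xs = CL ys"
  unfolding CL_def by (drule polyset_set_eq) simp

lemma CL_mono: assumes "set xs \<subseteq> set ys" shows "CL xs \<subseteq> CL ys"
proof
  fix a assume "a \<in> CL xs"
  then show "a \<in> CL ys" unfolding CL_iff using ralg_mono[OF polyset_set_mono[OF sring_k assms]] by blast
qed

lemma sring_CL: "set xs \<subseteq> Rv \<Longrightarrow> sring (CL xs)"
  unfolding CL_def by (rule sring_clv[OF sring_P polyset_R])

lemma P_CL: "set xs \<subseteq> Rv \<Longrightarrow> polyset k xs \<subseteq> CL xs"
  unfolding CL_def using P_clv[OF sring_P polyset_R] by blast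

lemma k_CL: "set xs \<subseteq> Rv \<Longrightarrow> k \<subseteq> CL xs"
  using P_CL polyset_subset[OF sring_k] by blast

lemma set_CL: "set xs \<subseteq> Rv \<Longrightarrow> set xs \<subseteq> CL xs"
  using P_CL polyset_set[of k xs] sring_k unfolding sring_def by blast

lemma CL_trans_gen:
  assumes ys: "set ys \<subseteq> Rv" and E: "E \<subseteq> Rv" "0 \<in> E" "E \<subseteq> CL ys" and a: "a \<in> Rv" and r: "ralg mv E a"
  shows "a \<in> CL ys"
  unfolding CL_def by (rule clv_trans[OF sring_P polyset_R[OF ys] E(1,2) E(3)[unfolded CL_def] a r])

lemma CL_trans:
  assumes xs: "set xs \<subseteq> Rv" and ys: "set ys \<subseteq> Rv" and sub: "set xs \<subseteq> CL ys"
  shows "CL xs \<subseteq> CL ys"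
proof
  fix a assume "a \<in> CL xs"
  then have a: "a \<in> Rv" "ralg mv (polyset k xs) a" by (auto simp: CL_iff)
  have "polyset k xs \<subseteq> CL ys" by (rule polyset_min[OF sring_CL[OF ys] k_CL[OF ys] sub])
  moreover have "0 \<in> polyset k xs" using polyset_subset[OF sring_k] sring_k unfolding sring_def by blast
  ultimately show "a \<in> CL ys" using CL_trans_gen[OF ys polyset_R[OF xs] _ _ a(1,2)] by blast
qed

lemma aim_mset: "aim k mv xs \<Longrightarrow> mset ys = mset xs \<Longrightarrow> aim k mv ys"
  by (rule aim_perm)

lemma exch:
  assumes S: "set S \<subseteq> Rv" and a: "a \<in> Rv" and b: "b \<in> Rv"
    and ia: "aim k mv (S @ [a])" and bn: "b \<notin> CL (S @ [a])"
  shows "a \<notin> CL (S @ [b])"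
proof -
  have "aim k mv ((S @ [a]) @ [b])" using aim_snoc_iff[of "S @ [a]" b] S a b ia bn by simp
  then have "aim k mv ((S @ [b]) @ [a])" by (rule aim_mset) simp
  then show ?thesis using aim_snoc_iff[of "S @ [b]" a] S a b by simp
qed

lemma greedy:
  assumes xs: "set xs \<subseteq> Rv" "aim k mv xs" and ys: "set ys \<subseteq> Rv"
  shows "\<exists>J. aim k mv (xs @ J) \<and> set J \<subseteq> set ys \<and> length J \<le> length ys \<and> set ys \<subseteq> CL (xs @ J)"
  using ys
proof (induction ys rule: rev_induct)
  case Nil then show ?case using xs by (intro exI[of _ "[]"]) simp
next
  case (snoc y ys)
  then obtain J where J: "aim k mv (xs @ J)" "set J \<subseteq> set ys" "length J \<le> length ys" "set ys \<subseteq> CL (xs @ J)"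
    by auto
  have y: "y \<in> Rv" using snoc by simp
  have xJ: "set (xs @ J) \<subseteq> Rv" using xs J snoc by auto
  show ?case
  proof (cases "y \<in> CL (xs @ J)")
    case True then show ?thesis using J by (intro exI[of _ J]) auto
  next
    case False
    then have "aim k mv ((xs @ J) @ [y])" using aim_snoc_iff[OF xJ y] J by simp
    moreover have "set ys \<subseteq> CL (xs @ J @ [y])" using J(4) CL_mono[of "xs @ J" "xs @ J @ [y]"] by auto
    moreover have "y \<in> CL (xs @ J @ [y])" using set_CL[of "xs @ J @ [y]"] xJ y by auto
    ultimately show ?thesis using J by (intro exI[of _ "J @ [y]"]) auto
  qed
qed

lemma bb_indep:
  "length B = n \<Longrightarrow> set P \<subseteq> Rv \<Longrightarrow> set B \<subseteq> Rv \<Longrightarrow> set Y \<subseteq> Rv \<Longrightarrow>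
   aim k mv (P @ B) \<Longrightarrow> aim k mv (P @ Y) \<Longrightarrow> set Y \<subseteq> CL (P @ B) \<Longrightarrow> length Y \<le> n"
proof (induction n arbitrary: P B Y)
  case 0
  then have B: "B = []" by simp
  show ?case
  proof (cases Y)
    case (Cons y Y')
    have "aim k mv (P @ [y])" using aim_prefix[of k mv "P @ [y]" Y'] 0(6) Cons by simp
    then have "y \<notin> CL P" using aim_snoc_iff[of P y] 0 Cons by simp
    then show ?thesis using 0(7) Cons B by simp
  qed simp
next
  case (Suc n)
  obtain B' b where Bb: "B = B' @ [b]" using Suc(2) by (metis length_Suc_conv_rev)
  have lB': "length B' = n" using Suc(2) Bb by simp
  have b: "b \<in> Rv" and B'R: "set B' \<subseteq> Rv" using Suc(4) Bb by auto
  have aPB': "aim k mv (P @ B')" using aim_prefix[of k mv "P @ B'" "[b]"] Suc(6) Bb by simp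
  show ?case
  proof (cases "set Y \<subseteq> CL (P @ B')")
    case True
    then have "length Y \<le> n" using Suc.IH[OF lB' Suc(3) B'R Suc(5) aPB' Suc(7)] by simp
    then show ?thesis by simp
  next
    case False
    then obtain y where yY: "y \<in> set Y" and yn: "y \<notin> CL (P @ B')" by blast
    have y: "y \<in> Rv" using yY Suc(5) by auto
    have PB'R: "set (P @ B') \<subseteq> Rv" using Suc(3) B'R by auto
    have ay: "aim k mv ((P @ B') @ [y])" using aim_snoc_iff[OF PB'R y] aPB' yn by simp
    have "b \<in> CL (P @ B' @ [y])"
    proof (rule ccontr)
      assume "b \<notin> CL (P @ B' @ [y])"
      then have "y \<notin> CL ((P @ B') @ [b])" using exch[OF PB'R y b ay] by simp
      moreover have "y \<in> CL (P @ B)" using Suc(8) yY by blast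
      ultimately show False using Bb by simp
    qed
    then have "set (P @ B) \<subseteq> CL (P @ B' @ [y])"
      using set_CL[of "P @ B' @ [y]"] PB'R y Bb by auto
    then have "CL (P @ B) \<subseteq> CL (P @ B' @ [y])"
      using CL_trans[of "P @ B" "P @ B' @ [y]"] PB'R y Bb b by auto
    then have Ysub: "set Y \<subseteq> CL ((P @ [y]) @ B')"
      using Suc(8) CL_set_eq[of "P @ B' @ [y]" "(P @ [y]) @ B'"] by auto
    obtain Y1 Y2 where Yy: "Y = Y1 @ y # Y2" using yY by (meson split_list)
    define Z where "Z = Y1 @ Y2"
    have aZ: "aim k mv ((P @ [y]) @ Z)" by (rule aim_mset[OF Suc(7)]) (simp add: Yy Z_def)
    have aB: "aim k mv ((P @ [y]) @ B')" by (rule aim_mset[OF ay]) simp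
    have ZR: "set Z \<subseteq> Rv" using Suc(5) Yy Z_def by auto
    have "set Z \<subseteq> CL ((P @ [y]) @ B')" using Ysub Yy Z_def by auto
    then have "length Z \<le> n" using Suc.IH[OF lB' _ B'R ZR aB aZ] Suc(3) y by simp
    then show ?thesis using Yy Z_def by simp
  qed
qed

lemma bb:
  assumes B: "set B \<subseteq> Rv" and Y: "set Y \<subseteq> Rv" "aim k mv Y" "set Y \<subseteq> CL B"
  shows "length Y \<le> length B"
proof -
  have a0: "aim k mv []" unfolding aim_def
  proof (intro allI impI)
    fix M :: "(nat \<Rightarrow> nat) set" and c
    assume H: "finite M \<and> M \<noteq> {} \<and> (\<forall>e\<in>M. \<forall>i\<ge>length ([]::'a list). e i = 0) \<and> (\<forall>e\<in>M. c e \<in> k \<and> c e \<notin> mv)"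
    then have all: "\<forall>e\<in>M. e = (\<lambda>_. 0)" by (auto intro!: ext)
    obtain e0 where "e0 \<in> M" using H by blast
    have "M = {\<lambda>_. 0}"
    proof (intro equalityI subsetI)
      fix x :: "nat \<Rightarrow> nat" assume "x \<in> M" then show "x \<in> {\<lambda>_. 0}" using all by simp
    next
      fix x :: "nat \<Rightarrow> nat" assume "x \<in> {\<lambda>_. 0}" then have "x = e0" using all \<open>e0 \<in> M\<close> by simp
      then show "x \<in> M" using \<open>e0 \<in> M\<close> by simp
    qed
    then show "mpoly_eval M c [] \<notin> mv" using H by (simp add: mpoly_eval_mon)
  qed
  obtain J where J: "aim k mv J" "set J \<subseteq> set B" "length J \<le> length B" "set B \<subseteq> CL J"
    using greedy[of "[]" B] a0 B by auto
  have JR: "set J \<subseteq> Rv" using J B by auto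
  have "set Y \<subseteq> CL J" using CL_trans[OF B JR J(4)] Y(3) by blast
  then have "length Y \<le> length J" using bb_indep[of J "length J" "[]" Y] JR Y J by simp
  then show ?thesis using J by simp
qed

end



lemma aim_Nil: "aim B I []"
  unfolding aim_def
proof (intro allI impI)
  fix M :: "(nat \<Rightarrow> nat) set" and c
  assume H: "finite M \<and> M \<noteq> {} \<and> (\<forall>e\<in>M. \<forall>i\<ge>length ([]::'a list). e i = 0) \<and> (\<forall>e\<in>M. c e \<in> B \<and> c e \<notin> I)"
  then have all: "\<forall>e\<in>M. e = (\<lambda>_. 0)" by (auto intro!: ext)
  obtain e0 where e0: "e0 \<in> M" using H by blast
  have "M = {\<lambda>_. 0}"
  proof (intro equalityI subsetI)
    fix x :: "nat \<Rightarrow> nat" assume "x \<in> M" then show "x \<in> {\<lambda>_. 0}" using all by simp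
  next
    fix x :: "nat \<Rightarrow> nat" assume "x \<in> {\<lambda>_. 0}" then have "x = e0" using all e0 by simp
    then show "x \<in> M" using e0 by simp
  qed
  then show "mpoly_eval M c ([]::'a list) \<notin> I" using H by (simp add: mpoly_eval_mon)
qed

lemma sring_UNIV: "sring (UNIV :: 'a::field set)" by (simp add: sring_def)
lemma idl_zero: "idl (UNIV :: 'a::field set) {0}" by (simp add: idl_def)

lemma aim_KA:
  fixes K' :: "'a::field set"
  assumes sK: "is_subfield K'" and kK: "k \<subseteq> K'" and zs: "set zs \<subseteq> K'"
    and az: "aim k {0} zs" and ay: "aim K' {0} ys"
  shows "aim k {0} (zs @ ys)"
  unfolding aim_def
proof (intro allI impI notI)
  fix M :: "(nat \<Rightarrow> nat) set" and c
  assume H: "finite M \<and> M \<noteq> {} \<and> (\<forall>e\<in>M. \<forall>i\<ge>length (zs @ ys). e i = 0) \<and> (\<forall>e\<in>M. c e \<in> k \<and> c e \<notin> {0})"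
    and inI: "mpoly_eval M c (zs @ ys) \<in> {0}"
  define p where "p = length zs"
  define G where "G = sndp p ` M"
  define F where "F g = fstp p ` {e\<in>M. sndp p e = g}" for g
  define Q where "Q g = mpoly_eval (F g) (\<lambda>b. c (comb p b g)) zs" for g
  have finM: "finite M" using H by blast
  have blk: "mpoly_eval M c (zs @ ys) = (\<Sum>g\<in>G. Q g * mmon ys g)"
    unfolding G_def Q_def F_def p_def by (rule mpoly_eval_block[OF finM])
  have finF: "finite (F g)" for g using finM by (simp add: F_def)
  have Fsupp: "\<forall>b\<in>F g. \<forall>j\<ge>length zs. b j = 0" for g by (auto simp: F_def fstp_def p_def)
  have Fcoef: "\<forall>b\<in>F g. c (comb p b g) \<in> k \<and> c (comb p b g) \<notin> {0}" for g
  proof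
    fix b assume "b \<in> F g"
    then obtain e where "e \<in> M" "sndp p e = g" "b = fstp p e" by (auto simp: F_def)
    then have "comb p b g = e" using comb_fst_snd by metis
    then show "c (comb p b g) \<in> k \<and> c (comb p b g) \<notin> {0}" using H \<open>e \<in> M\<close> by auto
  qed
  have sK': "sring K'" by (rule sring_subfield[OF sK])
  have QK: "Q g \<in> K'" for g
  proof -
    have "Q g \<in> polyset k zs" unfolding Q_def
      by (rule polysetI[OF finF Fsupp]) (use Fcoef in blast)
    then show ?thesis using polyset_min[OF sK' kK zs] by blast
  qed
  have Gsupp: "\<forall>g\<in>G. \<forall>i\<ge>length ys. g i = 0"
    using H by (auto simp: G_def sndp_def p_def)
  define G' where "G' = {g\<in>G. Q g \<noteq> 0}"
  have finG: "finite G" using finM by (simp add: G_def)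
  have "mpoly_eval G' Q ys = (\<Sum>g\<in>G. Q g * mmon ys g)"
    unfolding mpoly_eval_mon G'_def by (rule sum.mono_neutral_left) (use finG in auto)
  then have ev0: "mpoly_eval G' Q ys = 0" using blk inI by simp
  show False
  proof (cases "G' = {}")
    case False
    have "mpoly_eval G' Q ys \<notin> {0}"
      by (rule aimE[OF ay]) (use finG False Gsupp QK in \<open>auto simp: G'_def\<close>)
    then show False using ev0 by simp
  next
    case True
    obtain e0 where e0: "e0 \<in> M" using H by blast
    define g0 where "g0 = sndp p e0"
    have "g0 \<in> G" using e0 by (simp add: G_def g0_def)
    then have "Q g0 = 0" using True by (auto simp: G'_def)
    moreover have "F g0 \<noteq> {}" using e0 by (auto simp: F_def g0_def)
    ultimately show False using aimE[OF az finF _ Fsupp Fcoef] unfolding Q_def by blast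
  qed
qed

context vrk begin

lemma gb:
  assumes Rp: "Rp \<subseteq> Rv" "sring Rp" "k \<subseteq> Rp" and xs: "set xs \<subseteq> Rv" and RpCL: "Rp \<subseteq> CL xs"
  shows "set J \<subseteq> Rv \<Longrightarrow> aim k mv (xs @ J) \<Longrightarrow> aim Rp mv J"
proof (induction J rule: rev_induct)
  case Nil show ?case by (rule aim_Nil)
next
  case (snoc a J)
  have aR: "a \<in> Rv" and JR: "set J \<subseteq> Rv" using snoc by auto
  have xJR: "set (xs @ J) \<subseteq> Rv" using xs JR by auto
  have "aim k mv ((xs @ J) @ [a])" using snoc(3) by simp
  then have ih: "aim k mv (xs @ J)" and an: "a \<notin> CL (xs @ J)" using aim_snoc_iff[OF xJR aR] by auto
  have aJ: "aim Rp mv J" using snoc(1)[OF JR ih] .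
  have "\<not> ralg mv (polyset Rp J) a"
  proof
    assume r: "ralg mv (polyset Rp J) a"
    have ER: "polyset Rp J \<subseteq> Rv" by (rule polyset_min[OF sring_Rv Rp(1) JR])
    have E0: "0 \<in> polyset Rp J" using polyset_subset[OF Rp(2)] Rp(2) unfolding sring_def by blast
    have "Rp \<subseteq> CL (xs @ J)" using RpCL CL_mono[of xs "xs @ J"] by auto
    moreover have "set J \<subseteq> CL (xs @ J)" using set_CL[OF xJR] by auto
    ultimately have "polyset Rp J \<subseteq> CL (xs @ J)" by (rule polyset_min[OF sring_CL[OF xJR]])
    then have "a \<in> CL (xs @ J)" using CL_trans_gen[OF xJR ER E0 _ aR r] by blast
    then show False using an by simp
  qed
  then show ?case by (rule aim_snoc_intro[OF aJ])
qed

lemma aim_k_zero: assumes ax: "aim k mv xs" shows "aim k {0} xs"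
  unfolding aim_def
proof (intro allI impI)
  fix M :: "(nat \<Rightarrow> nat) set" and c
  assume H: "finite M \<and> M \<noteq> {} \<and> (\<forall>e\<in>M. \<forall>i\<ge>length xs. e i = 0) \<and> (\<forall>e\<in>M. c e \<in> k \<and> c e \<notin> {0})"
  have "\<forall>e\<in>M. c e \<in> k \<and> c e \<notin> mv" using H subfield_mv[OF sk kR] by auto
  then have "mpoly_eval M c xs \<notin> mv" using H by (intro aimE[OF ax]) auto
  then show "mpoly_eval M c xs \<notin> {0}" using zero_mv by auto
qed

lemma power_mv: "t \<in> mv \<Longrightarrow> n > 0 \<Longrightarrow> t ^ n \<in> mv"
proof (induction n)
  case (Suc n)
  show ?case
  proof (cases "n = 0")
    case False
    then have "t ^ n \<in> mv" using Suc by simp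
    then have "t * t ^ n \<in> mv" using mv_mult mv_Rv Suc(2) by blast
    then show ?thesis by simp
  qed (use Suc in simp)
qed simp

lemma nonzero_notin_mv:
  assumes xs: "set xs \<subseteq> Rv" and ax: "aim k mv xs" and v: "v \<in> polyset k xs" and v0: "v \<noteq> 0"
  shows "v \<notin> mv"
proof -
  obtain M c where Mc: "v = mpoly_eval M c xs" "finite M" "\<forall>e\<in>M. \<forall>i\<ge>length xs. e i = 0" "\<forall>e\<in>M. c e \<in> k"
    using v unfolding polyset_def by blast
  define M' where "M' = {e\<in>M. c e \<notin> {0}}"
  have "mpoly_eval M c xs - mpoly_eval M' c xs \<in> {0}"
    unfolding M'_def by (rule drop_I[OF sring_UNIV idl_zero _ _ Mc(2,4)]) auto
  then have vv: "v = mpoly_eval M' c xs" using Mc(1) by simp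
  have "M' \<noteq> {}" using v0 vv by (auto simp: mpoly_eval_mon)
  moreover have "\<forall>e\<in>M'. c e \<in> k \<and> c e \<notin> mv" using Mc(4) subfield_mv[OF sk kR] by (auto simp: M'_def)
  ultimately show ?thesis using aimE[OF ax _ _ _, of M' c] Mc(2,3) vv by (auto simp: M'_def)
qed

lemma upper:
  assumes xs: "set xs \<subseteq> Rv" and ax: "aim k mv xs" and t: "t \<in> mv" "t \<noteq> 0"
  shows "aim k {0} (xs @ [t])"
proof (rule aim_snoc_intro[OF aim_k_zero[OF ax]])
  show "\<not> ralg {0} (polyset k xs) t"
  proof
    assume "ralg {0} (polyset k xs) t"
    then obtain D c i1 where D: "finite D" "\<forall>i\<in>D. c i \<in> polyset k xs" "i1 \<in> D" "c i1 \<noteq> 0"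
        "(\<Sum>i\<in>D. c i * t ^ i) = 0"
      unfolding ralg_def by auto
    define D' where "D' = {i\<in>D. c i \<noteq> 0}"
    have finD': "finite D'" using D(1) by (simp add: D'_def)
    have D'ne: "D' \<noteq> {}" using D(3,4) by (auto simp: D'_def)
    define i0 where "i0 = Min D'"
    have i0D: "i0 \<in> D'" using finD' D'ne by (simp add: i0_def)
    have i0le: "\<forall>i\<in>D'. i0 \<le> i" using finD' by (simp add: i0_def)
    have cR: "c i \<in> Rv" if "i \<in> D" for i using D(2) that polyset_R[OF xs] by blast
    have cnm: "c i \<notin> mv" if "i \<in> D'" for i
      using nonzero_notin_mv[OF xs ax] D(2) that by (auto simp: D'_def)
    have tR: "t \<in> Rv" using t mv_Rv by blast
    have "(\<Sum>i\<in>D. c i * t ^ i) = (\<Sum>i\<in>D'. c i * t ^ i)"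
      unfolding D'_def by (rule sum.mono_neutral_right) (use D(1) in auto)
    also have "\<dots> = c i0 * t ^ i0 + (\<Sum>i\<in>D' - {i0}. c i * t ^ i)"
      using sum.remove[OF finD' i0D] by simp
    also have "(\<Sum>i\<in>D' - {i0}. c i * t ^ i) = t ^ i0 * (\<Sum>i\<in>D' - {i0}. c i * t ^ (i - i0))"
      unfolding sum_distrib_left
    proof (rule sum.cong[OF refl])
      fix i assume "i \<in> D' - {i0}"
      then have "i0 \<le> i" using i0le by auto
      then have "t ^ i = t ^ i0 * t ^ (i - i0)" by (simp add: power_add[symmetric])
      then show "c i * t ^ i = t ^ i0 * (c i * t ^ (i - i0))" by simp
    qed
    finally have eq: "(\<Sum>i\<in>D. c i * t ^ i) = t ^ i0 * (c i0 + (\<Sum>i\<in>D' - {i0}. c i * t ^ (i - i0)))"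
      by (simp add: algebra_simps)
    have sm: "(\<Sum>i\<in>D' - {i0}. c i * t ^ (i - i0)) \<in> mv"
    proof (rule idl_sum[OF idl_mv])
      show "finite (D' - {i0})" using finD' by simp
      fix i assume i: "i \<in> D' - {i0}"
      then have "i0 < i" using i0le by force
      then have "t ^ (i - i0) \<in> mv" using power_mv[OF t(1)] by simp
      then show "c i * t ^ (i - i0) \<in> mv" using mv_mult cR i by (auto simp: D'_def)
    qed
    have "c i0 + (\<Sum>i\<in>D' - {i0}. c i * t ^ (i - i0)) \<notin> mv"
      by (rule idl_add_notin[OF idl_mv cnm[OF i0D] sm])
    then have "c i0 + (\<Sum>i\<in>D' - {i0}. c i * t ^ (i - i0)) \<noteq> 0" using zero_mv by auto
    moreover have "t ^ i0 \<noteq> 0" using t(2) by simp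
    ultimately show False using eq D(5) by simp
  qed
qed

lemma normalize_aim:
  assumes sK: "is_subfield K'" and ys: "set ys \<subseteq> Rv" and ar: "aim (K' \<inter> Rv) mv ys"
  shows "aim K' {0} ys"
  unfolding aim_def
proof (intro allI impI notI)
  fix M :: "(nat \<Rightarrow> nat) set" and c
  assume H: "finite M \<and> M \<noteq> {} \<and> (\<forall>e\<in>M. \<forall>i\<ge>length ys. e i = 0) \<and> (\<forall>e\<in>M. c e \<in> K' \<and> c e \<notin> {0})"
    and inI: "mpoly_eval M c ys \<in> {0}"
  have finM: "finite M" and Mne: "M \<noteq> {}" using H by auto
  define \<mu> where "\<mu> = Min ((\<lambda>e. \<nu> (c e)) ` M)"
  have "\<mu> \<in> (\<lambda>e. \<nu> (c e)) ` M" unfolding \<mu>_def using finM Mne by (intro Min_in) auto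
  then obtain e0 where e0: "e0 \<in> M" "\<nu> (c e0) = \<mu>" by (elim imageE) simp
  have mule: "\<mu> \<le> \<nu> (c e)" if "e \<in> M" for e using finM that unfolding \<mu>_def by simp
  have c0: "c e \<noteq> 0" if "e \<in> M" for e using H that by auto
  define d where "d e = c e / c e0" for e
  have dK: "d e \<in> K'" if "e \<in> M" for e
  proof -
    have "inverse (c e0) \<in> K'" using sK H e0(1) c0[OF e0(1)] unfolding is_subfield_def by blast
    then show ?thesis using sK H that unfolding is_subfield_def d_def by (simp add: divide_inverse)
  qed
  have dR: "d e \<in> Rv" if "e \<in> M" for e
    using vdiv[OF c0[OF that] c0[OF e0(1)]] mule[OF that] e0(2) by (simp add: d_def Rv_iff)
  have d1: "d e0 = 1" using c0[OF e0(1)] by (simp add: d_def)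
  have "mpoly_eval M d ys = mpoly_eval M c ys / c e0"
    by (simp add: mpoly_eval_mon d_def sum_divide_distrib)
  then have evd: "mpoly_eval M d ys = 0" using inI by simp
  define M' where "M' = {e\<in>M. d e \<notin> mv}"
  have "mpoly_eval M d ys - mpoly_eval M' d ys \<in> mv"
    unfolding M'_def by (rule drop_I[OF sring_Rv idl_mv _ ys finM]) (use dR in auto)
  then have "- mpoly_eval M' d ys \<in> mv" using evd by simp
  then have ev': "mpoly_eval M' d ys \<in> mv" using mv_neg by fastforce
  have "mpoly_eval M' d ys \<notin> mv"
  proof (rule aimE[OF ar])
    show "finite M'" using finM by (simp add: M'_def)
    show "M' \<noteq> {}" using e0(1) d1 one_not_mv by (auto simp: M'_def)
    show "\<forall>e\<in>M'. \<forall>i\<ge>length ys. e i = 0" using H by (auto simp: M'_def)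
    show "\<forall>e\<in>M'. d e \<in> K' \<inter> Rv \<and> d e \<notin> mv" using dK dR by (auto simp: M'_def)
  qed
  then show False using ev' by simp
qed

end



lemma sring_Int: "sring A \<Longrightarrow> sring B \<Longrightarrow> sring (A \<inter> B)"
  unfolding sring_def by blast

context vrk begin

lemma aim_restrict:
  assumes sK: "is_subfield K'" and kK: "k \<subseteq> K'" and xs: "set xs \<subseteq> K'"
  shows "aim k (K' \<inter> mv) xs \<longleftrightarrow> aim k mv xs"
proof -
  have inK: "mpoly_eval M c xs \<in> K'" if "finite M" "\<forall>e\<in>M. \<forall>i\<ge>length xs. e i = 0" "\<forall>e\<in>M. c e \<in> k"
    for M :: "(nat \<Rightarrow> nat) set" and c
    using polysetI[OF that] polyset_min[OF sring_subfield[OF sK] kK xs] by blast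
  have cc: "\<And>c M. (\<forall>e\<in>M. c e \<in> k \<and> c e \<notin> K' \<inter> mv) = (\<forall>e\<in>M. c e \<in> k \<and> c e \<notin> mv)"
    using kK by blast
  show ?thesis unfolding aim_def cc
  proof (intro iffI allI impI)
    fix M :: "(nat \<Rightarrow> nat) set" and c
    assume A: "\<forall>M c. finite M \<and> M \<noteq> {} \<and> (\<forall>e\<in>M. \<forall>i\<ge>length xs. e i = 0) \<and> (\<forall>e\<in>M. c e \<in> k \<and> c e \<notin> mv) \<longrightarrow>
         mpoly_eval M c xs \<notin> K' \<inter> mv"
      and H: "finite M \<and> M \<noteq> {} \<and> (\<forall>e\<in>M. \<forall>i\<ge>length xs. e i = 0) \<and> (\<forall>e\<in>M. c e \<in> k \<and> c e \<notin> mv)"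
    then have "mpoly_eval M c xs \<notin> K' \<inter> mv" by blast
    moreover have "mpoly_eval M c xs \<in> K'" using H inK by blast
    ultimately show "mpoly_eval M c xs \<notin> mv" by blast
  next
    fix M :: "(nat \<Rightarrow> nat) set" and c
    assume A: "\<forall>M c. finite M \<and> M \<noteq> {} \<and> (\<forall>e\<in>M. \<forall>i\<ge>length xs. e i = 0) \<and> (\<forall>e\<in>M. c e \<in> k \<and> c e \<notin> mv) \<longrightarrow>
         mpoly_eval M c xs \<notin> mv"
      and H: "finite M \<and> M \<noteq> {} \<and> (\<forall>e\<in>M. \<forall>i\<ge>length xs. e i = 0) \<and> (\<forall>e\<in>M. c e \<in> k \<and> c e \<notin> mv)"
    then show "mpoly_eval M c xs \<notin> K' \<inter> mv" by blast
  qed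
qed

lemma aim_mv_iff: "alg_indep_mod k mv xs = aim k mv xs"
  by (rule aim_iff_alg_indep_mod) (use subfield_mv[OF sk kR] in blast)

lemma aim_zero_iff: "alg_indep_mod k {0} xs = aim k {0} xs"
  by (rule aim_iff_alg_indep_mod) simp

lemma aim_K'_iff:
  assumes sK: "is_subfield K'" and kK: "k \<subseteq> K'" and xs: "set xs \<subseteq> K'"
  shows "alg_indep_mod k (K' \<inter> mv) xs = aim k mv xs"
proof -
  have "alg_indep_mod k (K' \<inter> mv) xs = aim k (K' \<inter> mv) xs"
    by (rule aim_iff_alg_indep_mod) (use subfield_mv[OF sk kR] kK in blast)
  then show ?thesis using aim_restrict[OF sK kK xs] by simp
qed

end

theorem proposition15:
  fixes k K' :: "'a::field set" and \<nu> :: "'a \<Rightarrow> int" and n m :: nat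
  assumes "alg_closed_subfield k"
    and "fin_gen_over k (UNIV :: 'a set)"
    and "has_trdeg k UNIV {0} n"
    and "discrete_valuation \<nu>"
    and "k \<subseteq> val_ring \<nu>"
    and "has_trdeg k (val_ring \<nu>) (val_ideal \<nu>) (n - 1)"
    and "is_subfield K'" and "k \<subseteq> K'" and "fin_gen_over k K'"
    and "has_trdeg k K' {0} m" and "m \<le> n"
    and "K' \<inter> val_ideal \<nu> \<noteq> {0}"
  shows "has_trdeg k (K' \<inter> val_ring \<nu>) (K' \<inter> val_ideal \<nu>) (m - 1)"
proof -
  have sk: "is_subfield k" using assms(1) unfolding alg_closed_subfield_def by blast
  interpret vrk \<nu> k by unfold_locales (use assms(4,5) sk in auto)
  have sK: "is_subfield K'" and kK: "k \<subseteq> K'" using assms(7,8) .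
  define R' where "R' = K' \<inter> Rv"
  have R'R: "R' \<subseteq> Rv" and R'K: "R' \<subseteq> K'" by (auto simp: R'_def)
  have iff': "alg_indep_mod k (K' \<inter> mv) xs = aim k mv xs" if "set xs \<subseteq> R'" for xs
    using aim_K'_iff[OF sK kK] that R'K by blast
  have "0 \<in> K'" using sK unfolding is_subfield_def by blast
  then obtain t where t: "t \<in> K'" "t \<in> mv" "t \<noteq> 0" using assms(12) zero_mv by blast
  have maxK': "length xs \<le> m" if "set xs \<subseteq> K'" "aim k {0} xs" for xs
  proof -
    have "alg_indep_mod k {0} xs" using that(2) aim_zero_iff by simp
    then show ?thesis using assms(10) that(1) unfolding has_trdeg_def by blast
  qed
  have maxU: "length xs \<le> n" if "aim k {0} xs" for xs
  proof -
    have "alg_indep_mod k {0} xs" using that aim_zero_iff by simp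
    then show ?thesis using assms(3) unfolding has_trdeg_def by blast
  qed
  have up: "length xs \<le> m - 1" if "set xs \<subseteq> R'" "aim k mv xs" for xs
  proof -
    have "aim k {0} (xs @ [t])" by (rule upper) (use that R'R t in auto)
    moreover have "set (xs @ [t]) \<subseteq> K'" using that(1) R'K t(1) by auto
    ultimately have "length (xs @ [t]) \<le> m" using maxK' by blast
    then show ?thesis by simp
  qed
  define S where "S = {length xs | xs. set xs \<subseteq> R' \<and> aim k mv xs}"
  have Sb: "\<forall>s\<in>S. s \<le> m - 1"
  proof
    fix s assume "s \<in> S"
    then obtain xs where "s = length xs" "set xs \<subseteq> R'" "aim k mv xs" unfolding S_def by blast
    then show "s \<le> m - 1" using up by simp
  qed
  have finS: "finite S" using Sb unfolding finite_nat_set_iff_bounded_le by blast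
  have "0 \<in> S" unfolding S_def using aim_Nil[of k mv] by (intro CollectI exI[of _ "[]"]) simp
  then have "S \<noteq> {}" by (metis empty_iff)
  then have "Max S \<in> S" by (rule Max_in[OF finS])
  then have "\<exists>xs. Max S = length xs \<and> set xs \<subseteq> R' \<and> aim k mv xs" unfolding S_def by (simp only: mem_Collect_eq)
  then obtain xs0 where xs0': "Max S = length xs0" "set xs0 \<subseteq> R'" "aim k mv xs0" by (elim exE conjE)
  then have xs0: "set xs0 \<subseteq> R'" "aim k mv xs0" "length xs0 = Max S" by simp_all
  have xs0R: "set xs0 \<subseteq> Rv" using xs0(1) R'R by (rule order_trans)
  have R'CL: "R' \<subseteq> CL xs0"
  proof
    fix a assume a: "a \<in> R'"
    have "\<not> aim k mv (xs0 @ [a])"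
    proof
      assume h: "aim k mv (xs0 @ [a])"
      have "set (xs0 @ [a]) \<subseteq> R'" using xs0(1) a by simp
      then have "length (xs0 @ [a]) \<in> S" unfolding S_def using h by (intro CollectI exI[of _ "xs0 @ [a]"]) simp
      then have "length (xs0 @ [a]) \<le> Max S" using finS by simp
      then show False using xs0 by simp
    qed
    moreover have "a \<in> Rv" using a R'R by blast
    ultimately show "a \<in> CL xs0" using aim_snoc_iff[OF xs0R] xs0(2) by blast
  qed
  obtain ys where ys: "set ys \<subseteq> Rv" "length ys = n - 1" "alg_indep_mod k mv ys"
    using assms(6) unfolding has_trdeg_def by blast
  then have ys3: "aim k mv ys" using aim_mv_iff by simp
  obtain J where J: "aim k mv (xs0 @ J)" "set J \<subseteq> set ys" "length J \<le> length ys" "set ys \<subseteq> CL (xs0 @ J)"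
    using greedy[OF xs0R xs0(2) ys(1)] by (elim exE conjE)
  have JR: "set J \<subseteq> Rv" using J ys by blast
  have "length ys \<le> length (xs0 @ J)" by (rule bb) (use xs0R JR ys ys3 J in auto)
  then have ineq1: "n - 1 \<le> length xs0 + length J" using ys by simp
  have sR': "sring R'" unfolding R'_def by (rule sring_Int[OF sring_subfield[OF sK] sring_Rv])
  have kR': "k \<subseteq> R'" using kK kR by (auto simp: R'_def)
  have "aim R' mv J" by (rule gb[OF R'R sR' kR' xs0R R'CL JR J(1)])
  then have "aim K' {0} J" using normalize_aim[OF sK JR] by (simp add: R'_def)
  moreover obtain zs where zs: "set zs \<subseteq> K'" "length zs = m" "alg_indep_mod k {0} zs"
    using assms(10) unfolding has_trdeg_def by blast
  moreover have "aim k {0} zs" using zs(3) aim_zero_iff by simp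
  ultimately have "aim k {0} (zs @ J)" using aim_KA[OF sK kK zs(1)] by blast
  then have "length (zs @ J) \<le> n" by (rule maxU)
  then have "m + length J \<le> n" using zs(2) by simp
  then have r: "m - 1 \<le> length xs0" using ineq1 by linarith
  define xs1 where "xs1 = take (m - 1) xs0"
  have "aim k mv xs1" using aim_prefix[of k mv xs1 "drop (m - 1) xs0"] xs0(2) by (simp add: xs1_def)
  moreover have "set xs1 \<subseteq> R'" using xs0(1) set_take_subset[of "m - 1" xs0] by (auto simp: xs1_def)
  moreover have "length xs1 = m - 1" using r by (simp add: xs1_def)
  ultimately have ex: "set xs1 \<subseteq> R' \<and> length xs1 = m - 1 \<and> alg_indep_mod k (K' \<inter> mv) xs1"
    using iff' by blast
  have al: "\<forall>xs. set xs \<subseteq> R' \<and> alg_indep_mod k (K' \<inter> mv) xs \<longrightarrow> length xs \<le> m - 1"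
    using iff' up by blast
  show ?thesis unfolding has_trdeg_def R'_def[symmetric] using ex al by blast
qed


end
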